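(* Let $(\mu,\mathcal{S},L,\pi)$ (continuous time) and $(\mu,\mathcal{S},K,\pi)$ (discrete time) be irreducible, reversible finite Markov chains, $T_2(\mu,\cdot)$ the $L^2$-mixing time, and $\alpha(c)=\sqrt{\tau(c)\lambda_{j(c)}}$. (1) Continuous time: for $0<c<\pi(|\mu/\pi|^2)-1$ and $A>0$, \[\frac{\alpha(c)}{\alpha(c)+A}T_2\Big(\mu,\sqrt{c+\tfrac{A+\alpha(c)}{Ae^{\alpha(c)A}}}\Big)\le\tau(c)\le T_2\Big(\mu,\sqrt{\tfrac{c}{1+c}}\Big),\] and for $0<\epsilon<\sqrt{[\pi(|\mu/\pi-1|^2)\wedge1]/2}$, $\tau(2\epsilon^2)\le T_2(\mu,\epsilon)\le\frac{6}{\epsilon^4}\tau(\epsilon^2/2)$. (2) Discrete time: for $0<c<\pi(|\mu/\pi|^2)-1$ and $A>0$, \[\frac{\alpha(c)}{\alpha(c)+A}\Big(T_2\Big(\mu,\sqrt{c+\tfrac{A+\alpha(c)}{Ae^{\alpha(c)A}}}\Big)-1\Big)\le\tau(c)\le T_2\Big(\mu,\sqrt{\tfrac{c}{1+c}}\Big),\] and for $0<\epsilon<\sqrt{[\pi(|\mu/\pi-1|^2)\wedge1]/2}$, $\tau(2\epsilon^2)\le T_2(\mu,\epsilon)\le\frac{6}{\epsilon^4}\tau(\epsilon^2/2)+1$.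
   Context: $L^2$-distance: continuous time $d_2(\mu,t)=\|\mu e^{tL}/\pi-1\|_{L^2(\pi)}$, discrete time $d_2(\mu,m)=\|\mu K^m/\pi-1\|_{L^2(\pi)}$ ($m$ integer), where $\|f\|_{L^2(\pi)}^2=\sum_y|f(y)|^2\pi(y)$; $T_2(\mu,\epsilon)=\min\{t\ge0:d_2(\mu,t)\le\epsilon\}$ (integer $t$ in discrete time); $\pi(|f|^2)=\sum_y|f(y)|^2\pi(y)$. Continuous time: $0=\lambda_0<\lambda_1\le\dots\le\lambda_{|\mathcal{S}|-1}$ eigenvalues of $-L$ with $L^2(\pi)$-orthonormal right eigenvectors $\phi_0=\mathbf1,\phi_1,\dots$. Discrete time: eigenvalues $\beta_0=1,\beta_1,\dots$ of $K$ with $|\beta_1|\ge|\beta_2|\ge\cdots$, orthonormal eigenvectors $\phi_i$, and $\lambda_i:=-\log|\beta_i|$ ($-\log0=\infty$, $1/\infty=0$). In both cases $\mu(\phi)=\sum_x\mu(x)\phi(x)$, $j(c)=\min\{j\ge1:\sum_{i=1}^j|\mu(\phi_i)|^2>c\}$, $\tau(c)=\max_{j\ge j(c)}\frac{\log(1+\sum_{i=1}^j|\mu(\phi_i)|^2)}{2\lambda_j}$. *)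

theory Defs
  imports Complex_Main "HOL-Library.Extended_Real" "HOL-Library.Extended_Nat"
begin

definition prob_vec :: "('a::finite \<Rightarrow> real) \<Rightarrow> bool" where
  "prob_vec \<mu> \<longleftrightarrow> (\<forall>x. 0 \<le> \<mu> x) \<and> (\<Sum>x\<in>UNIV. \<mu> x) = 1"

definition pos_prob_vec :: "('a::finite \<Rightarrow> real) \<Rightarrow> bool" where
  "pos_prob_vec \<pi> \<longleftrightarrow> (\<forall>x. 0 < \<pi> x) \<and> (\<Sum>x\<in>UNIV. \<pi> x) = 1"

definition generator :: "('a::finite \<Rightarrow> 'a \<Rightarrow> real) \<Rightarrow> bool" where
  "generator L \<longleftrightarrow> (\<forall>x y. x \<noteq> y \<longrightarrow> 0 \<le> L x y) \<and> (\<forall>x. (\<Sum>y\<in>UNIV. L x y) = 0)"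

definition stochastic :: "('a::finite \<Rightarrow> 'a \<Rightarrow> real) \<Rightarrow> bool" where
  "stochastic K \<longleftrightarrow> (\<forall>x y. 0 \<le> K x y) \<and> (\<forall>x. (\<Sum>y\<in>UNIV. K x y) = 1)"

definition irreducible_kernel :: "('a \<Rightarrow> 'a \<Rightarrow> real) \<Rightarrow> bool" where
  "irreducible_kernel Q \<longleftrightarrow> (\<forall>x y. (x, y) \<in> {(a, b). a \<noteq> b \<and> 0 < Q a b}\<^sup>*)"

definition reversible :: "('a \<Rightarrow> 'a \<Rightarrow> real) \<Rightarrow> ('a \<Rightarrow> real) \<Rightarrow> bool" where
  "reversible Q \<pi> \<longleftrightarrow> (\<forall>x y. \<pi> x * Q x y = \<pi> y * Q y x)"

primrec mpow :: "('a::finite \<Rightarrow> 'a \<Rightarrow> real) \<Rightarrow> nat \<Rightarrow> 'a \<Rightarrow> 'a \<Rightarrow> real" where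
  "mpow Q 0 = (\<lambda>x y. if x = y then 1 else 0)"
| "mpow Q (Suc k) = (\<lambda>x y. \<Sum>z\<in>UNIV. mpow Q k x z * Q z y)"

definition heat :: "('a::finite \<Rightarrow> 'a \<Rightarrow> real) \<Rightarrow> real \<Rightarrow> 'a \<Rightarrow> 'a \<Rightarrow> real" where
  "heat L t x y = (\<Sum>k. t ^ k / fact k * mpow L k x y)"

definition l2norm :: "('a::finite \<Rightarrow> real) \<Rightarrow> ('a \<Rightarrow> real) \<Rightarrow> real" where
  "l2norm \<pi> f = sqrt (\<Sum>y\<in>UNIV. (f y)\<^sup>2 * \<pi> y)"

definition pi_sq :: "('a::finite \<Rightarrow> real) \<Rightarrow> ('a \<Rightarrow> real) \<Rightarrow> real" where
  "pi_sq \<pi> f = (\<Sum>y\<in>UNIV. (f y)\<^sup>2 * \<pi> y)"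

definition d2_ct :: "('a::finite \<Rightarrow> 'a \<Rightarrow> real) \<Rightarrow> ('a \<Rightarrow> real) \<Rightarrow> ('a \<Rightarrow> real) \<Rightarrow> real \<Rightarrow> real" where
  "d2_ct L \<pi> \<mu> t = l2norm \<pi> (\<lambda>y. (\<Sum>x\<in>UNIV. \<mu> x * heat L t x y) / \<pi> y - 1)"

definition d2_dt :: "('a::finite \<Rightarrow> 'a \<Rightarrow> real) \<Rightarrow> ('a \<Rightarrow> real) \<Rightarrow> ('a \<Rightarrow> real) \<Rightarrow> nat \<Rightarrow> real" where
  "d2_dt K \<pi> \<mu> m = l2norm \<pi> (\<lambda>y. (\<Sum>x\<in>UNIV. \<mu> x * mpow K m x y) / \<pi> y - 1)"

text \<open>T_2 in continuous time: min { t >= 0 : d_2(mu,t) <= eps } (the set is closed, so Inf = min).\<close>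
definition T2_ct :: "('a::finite \<Rightarrow> 'a \<Rightarrow> real) \<Rightarrow> ('a \<Rightarrow> real) \<Rightarrow> ('a \<Rightarrow> real) \<Rightarrow> real \<Rightarrow> real" where
  "T2_ct L \<pi> \<mu> \<epsilon> = Inf {t. 0 \<le> t \<and> d2_ct L \<pi> \<mu> t \<le> \<epsilon>}"

definition T2_dt :: "('a::finite \<Rightarrow> 'a \<Rightarrow> real) \<Rightarrow> ('a \<Rightarrow> real) \<Rightarrow> ('a \<Rightarrow> real) \<Rightarrow> real \<Rightarrow> enat" where
  "T2_dt K \<pi> \<mu> \<epsilon> = (if \<exists>m. d2_dt K \<pi> \<mu> m \<le> \<epsilon>
      then enat (LEAST m. d2_dt K \<pi> \<mu> m \<le> \<epsilon>) else \<infinity>)"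

definition mu_of :: "('a::finite \<Rightarrow> real) \<Rightarrow> ('a \<Rightarrow> real) \<Rightarrow> real" where
  "mu_of \<mu> f = (\<Sum>x\<in>UNIV. \<mu> x * f x)"

definition spec_sum :: "('a::finite \<Rightarrow> real) \<Rightarrow> (nat \<Rightarrow> 'a \<Rightarrow> real) \<Rightarrow> nat \<Rightarrow> real" where
  "spec_sum \<mu> \<phi> j = (\<Sum>i=1..j. (mu_of \<mu> (\<phi> i))\<^sup>2)"

definition jc :: "('a::finite \<Rightarrow> real) \<Rightarrow> (nat \<Rightarrow> 'a \<Rightarrow> real) \<Rightarrow> real \<Rightarrow> nat" where
  "jc \<mu> \<phi> c = (LEAST j. 1 \<le> j \<and> c < spec_sum \<mu> \<phi> j)"

definition ct_spectral :: "('a::finite \<Rightarrow> 'a \<Rightarrow> real) \<Rightarrow> ('a \<Rightarrow> real) \<Rightarrow> (nat \<Rightarrow> real) \<Rightarrow> (nat \<Rightarrow> 'a \<Rightarrow> real) \<Rightarrow> bool" where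
  "ct_spectral L \<pi> lam \<phi> \<longleftrightarrow>
     lam 0 = 0 \<and> \<phi> 0 = (\<lambda>x. 1) \<and>
     (\<forall>i j. i \<le> j \<and> j < card (UNIV :: 'a set) \<longrightarrow> lam i \<le> lam j) \<and>
     (\<forall>i<card (UNIV :: 'a set). \<forall>k<card (UNIV :: 'a set). (\<Sum>x\<in>UNIV. \<phi> i x * \<phi> k x * \<pi> x) = (if i = k then 1 else 0)) \<and>
     (\<forall>i<card (UNIV :: 'a set). \<forall>x. (\<Sum>y\<in>UNIV. L x y * \<phi> i y) = - lam i * \<phi> i x)"

definition dt_spectral :: "('a::finite \<Rightarrow> 'a \<Rightarrow> real) \<Rightarrow> ('a \<Rightarrow> real) \<Rightarrow> (nat \<Rightarrow> real) \<Rightarrow> (nat \<Rightarrow> 'a \<Rightarrow> real) \<Rightarrow> bool" where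
  "dt_spectral K \<pi> \<beta> \<phi> \<longleftrightarrow>
     \<beta> 0 = 1 \<and> \<phi> 0 = (\<lambda>x. 1) \<and>
     (\<forall>i j. 1 \<le> i \<and> i \<le> j \<and> j < card (UNIV :: 'a set) \<longrightarrow> \<bar>\<beta> j\<bar> \<le> \<bar>\<beta> i\<bar>) \<and>
     (\<forall>i<card (UNIV :: 'a set). \<forall>k<card (UNIV :: 'a set). (\<Sum>x\<in>UNIV. \<phi> i x * \<phi> k x * \<pi> x) = (if i = k then 1 else 0)) \<and>
     (\<forall>i<card (UNIV :: 'a set). \<forall>x. (\<Sum>y\<in>UNIV. K x y * \<phi> i y) = \<beta> i * \<phi> i x)"

definition tau_ct :: "('a::finite \<Rightarrow> real) \<Rightarrow> (nat \<Rightarrow> real) \<Rightarrow> (nat \<Rightarrow> 'a \<Rightarrow> real) \<Rightarrow> real \<Rightarrow> real" where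
  "tau_ct \<mu> lam \<phi> c =
     Max ((\<lambda>j. ln (1 + spec_sum \<mu> \<phi> j) / (2 * lam j)) ` {jc \<mu> \<phi> c ..< card (UNIV :: 'a set)})"

definition alpha_ct :: "('a::finite \<Rightarrow> real) \<Rightarrow> (nat \<Rightarrow> real) \<Rightarrow> (nat \<Rightarrow> 'a \<Rightarrow> real) \<Rightarrow> real \<Rightarrow> real" where
  "alpha_ct \<mu> lam \<phi> c = sqrt (tau_ct \<mu> lam \<phi> c * lam (jc \<mu> \<phi> c))"

text \<open>Discrete time: lambda_i = -log|beta_i| in the extended reals, with -log 0 = infinity.
  Divisions below are extended-real divisions (x / infinity = 0, x / 0 = infinity for x > 0).\<close>
definition lam_dt :: "(nat \<Rightarrow> real) \<Rightarrow> nat \<Rightarrow> ereal" where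
  "lam_dt \<beta> i = (if \<beta> i = 0 then \<infinity> else ereal (- ln \<bar>\<beta> i\<bar>))"

definition tau_dt :: "('a::finite \<Rightarrow> real) \<Rightarrow> (nat \<Rightarrow> real) \<Rightarrow> (nat \<Rightarrow> 'a \<Rightarrow> real) \<Rightarrow> real \<Rightarrow> ereal" where
  "tau_dt \<mu> \<beta> \<phi> c =
     Max ((\<lambda>j. ereal (ln (1 + spec_sum \<mu> \<phi> j)) / (2 * lam_dt \<beta> j)) ` {jc \<mu> \<phi> c ..< card (UNIV :: 'a set)})"

text \<open>alpha(c) = sqrt(tau(c) lambda_{j(c)}), with 0 * infinity = 0; only meaningful when tau(c) is finite
  (when tau(c) = infinity the inequality involving alpha is trivially true).\<close>
definition alpha_dt :: "('a::finite \<Rightarrow> real) \<Rightarrow> (nat \<Rightarrow> real) \<Rightarrow> (nat \<Rightarrow> 'a \<Rightarrow> real) \<Rightarrow> real \<Rightarrow> real" where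
  "alpha_dt \<mu> \<beta> \<phi> c = sqrt (real_of_ereal (tau_dt \<mu> \<beta> \<phi> c * lam_dt \<beta> (jc \<mu> \<phi> c)))"

end

theory Submission
  imports Defs "HOL-Analysis.Analysis"
begin


lemma complete_onb:
  fixes \<pi> :: "'a::finite \<Rightarrow> real" and \<phi> :: "nat \<Rightarrow> 'a \<Rightarrow> real"
  assumes pos: "\<And>x. 0 < \<pi> x"
    and orth: "\<And>i k. i < CARD('a) \<Longrightarrow> k < CARD('a) \<Longrightarrow>
        (\<Sum>x\<in>UNIV. \<phi> i x * \<phi> k x * \<pi> x) = (if i = k then 1 else 0)"
  shows "(\<Sum>i<CARD('a). \<phi> i x * \<phi> i y * \<pi> y) = (if x = y then 1 else 0)"
proof -
  define n where "n = CARD('a)"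
  define v where "v i = (\<chi> x. \<phi> i x * sqrt (\<pi> x))" for i :: nat
  have vin: "v i \<bullet> v k = (if i = k then 1 else 0)" if "i < n" "k < n" for i k
  proof -
    have "v i \<bullet> v k = (\<Sum>x\<in>UNIV. \<phi> i x * \<phi> k x * \<pi> x)"
      unfolding v_def inner_vec_def
      by (intro sum.cong refl) (simp add: pos less_imp_le algebra_simps real_sqrt_mult[symmetric])
    then show ?thesis using orth that n_def by simp
  qed
  have inj: "inj_on v {..<n}"
  proof (rule inj_onI)
    fix i k assume "i \<in> {..<n}" "k \<in> {..<n}" "v i = v k"
    then show "i = k" using vin[of i i] vin[of i k] by (auto split: if_splits)
  qed
  define B where "B = v ` {..<n}"
  have cardB: "card B = n" unfolding B_def using inj by (simp add: card_image)
  have indep: "independent B"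
  proof (rule pairwise_orthogonal_independent)
    show "pairwise orthogonal B" unfolding B_def pairwise_def orthogonal_def
      using vin by auto
    show "0 \<notin> B" unfolding B_def using vin by force
  qed
  have "UNIV \<subseteq> span B"
    using card_eq_dim[of B UNIV] indep cardB unfolding n_def by (simp add: B_def)
  define z where "z = (axis y (1::real) :: real^'a)"
  define g where "g = z - (\<Sum>i<n. (z \<bullet> v i) *\<^sub>R v i)"
  have g_orth: "orthogonal g b" if "b \<in> B" for b
  proof -
    obtain k where k: "k < n" "b = v k" using \<open>b \<in> B\<close> B_def by auto
    have "(\<Sum>i<n. (z \<bullet> v i) *\<^sub>R v i) \<bullet> v k = (\<Sum>i<n. (z \<bullet> v i) * (v i \<bullet> v k))"
      by (simp add: inner_sum_left)
    also have "\<dots> = (\<Sum>i<n. if i = k then z \<bullet> v k else 0)"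
      by (intro sum.cong refl) (simp add: vin k)
    also have "\<dots> = z \<bullet> v k" using k by simp
    finally show ?thesis unfolding orthogonal_def g_def k by (simp add: inner_diff_left)
  qed
  have "orthogonal g g" using orthogonal_to_span[of g B g] g_orth \<open>UNIV \<subseteq> span B\<close>
    by (auto simp: orthogonal_commute)
  then have "g = 0" by (simp add: orthogonal_def)
  then have zeq: "z = (\<Sum>i<n. (z \<bullet> v i) *\<^sub>R v i)" unfolding g_def by simp
  have "z $ x = (\<Sum>i<n. ((z \<bullet> v i) *\<^sub>R v i) $ x)"
    by (subst zeq) (rule sum_component)
  then have "z $ x = (\<Sum>i<n. (z \<bullet> v i) * (v i $ x))" by simp
  moreover have "z \<bullet> v i = \<phi> i y * sqrt (\<pi> y)" for i
    unfolding z_def by (simp add: inner_axis' v_def)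
  ultimately have eq: "(if x = y then 1 else 0) = (\<Sum>i<n. \<phi> i y * sqrt (\<pi> y) * (\<phi> i x * sqrt (\<pi> x)))"
    unfolding z_def v_def by (simp add: axis_def)
  have sp: "sqrt (\<pi> x) > 0" "sqrt (\<pi> y) > 0" using pos by auto
  have "(\<Sum>i<n. \<phi> i x * \<phi> i y * \<pi> y) = (sqrt (\<pi> y) / sqrt (\<pi> x)) * (\<Sum>i<n. \<phi> i y * sqrt (\<pi> y) * (\<phi> i x * sqrt (\<pi> x)))"
    unfolding sum_distrib_left
    by (intro sum.cong refl) (use sp pos[of x] pos[of y] in \<open>simp add: field_simps less_imp_le real_sqrt_mult[symmetric]\<close>)
  also have "\<dots> = (if x = y then 1 else 0)" using eq[symmetric] sp by auto
  finally show ?thesis unfolding n_def .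
qed

definition onb :: "('a::finite \<Rightarrow> real) \<Rightarrow> (nat \<Rightarrow> 'a \<Rightarrow> real) \<Rightarrow> bool" where
  "onb \<pi> \<phi> \<longleftrightarrow> (\<forall>x. 0 < \<pi> x) \<and> (\<forall>i<CARD('a). \<forall>k<CARD('a).
      (\<Sum>x\<in>UNIV. \<phi> i x * \<phi> k x * \<pi> x) = (if i = k then 1 else 0))"

lemma onb_complete:
  fixes \<pi> :: "'a::finite \<Rightarrow> real"
  assumes "onb \<pi> \<phi>"
  shows "(\<Sum>i<CARD('a::finite). \<phi> i x * \<phi> i y * \<pi> y) = (if x = y then 1 else 0)"
  using assms unfolding onb_def by (intro complete_onb) auto

lemma onb_expand:
  fixes f :: "'a::finite \<Rightarrow> real"
  assumes "onb \<pi> \<phi>"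
  shows "f x = (\<Sum>i<CARD('a). (\<Sum>y\<in>UNIV. f y * \<phi> i y * \<pi> y) * \<phi> i x)"
proof -
  have "f x = (\<Sum>y\<in>UNIV. if x = y then f y else 0)" by simp
  also have "\<dots> = (\<Sum>y\<in>UNIV. f y * (if x = y then 1 else 0))"
    by (intro sum.cong refl) auto
  also have "\<dots> = (\<Sum>y\<in>UNIV. f y * (\<Sum>i<CARD('a). \<phi> i x * \<phi> i y * \<pi> y))"
    using onb_complete[OF assms] by simp
  also have "\<dots> = (\<Sum>i<CARD('a). (\<Sum>y\<in>UNIV. f y * \<phi> i y * \<pi> y) * \<phi> i x)"
    unfolding sum_distrib_left sum_distrib_right
    by (subst sum.swap) (simp add: algebra_simps)
  finally show ?thesis .
qed

lemma onb_norm: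
  fixes c :: "nat \<Rightarrow> real"
  assumes "onb \<pi> (\<phi> :: nat \<Rightarrow> 'a::finite \<Rightarrow> real)" "I \<subseteq> {..<CARD('a)}"
  shows "(\<Sum>y\<in>UNIV. (\<Sum>i\<in>I. c i * \<phi> i y)\<^sup>2 * \<pi> y) = (\<Sum>i\<in>I. (c i)\<^sup>2)"
proof -
  have fin: "finite I" using assms(2) finite_subset by blast
  have "(\<Sum>y\<in>UNIV. (\<Sum>i\<in>I. c i * \<phi> i y)\<^sup>2 * \<pi> y)
      = (\<Sum>y\<in>UNIV. \<Sum>i\<in>I. \<Sum>k\<in>I. c i * c k * (\<phi> i y * \<phi> k y * \<pi> y))"
  proof (intro sum.cong refl)
    fix y
    have "(\<Sum>i\<in>I. c i * \<phi> i y)\<^sup>2 * \<pi> y = (\<Sum>i\<in>I. \<Sum>k\<in>I. (c i * \<phi> i y) * (c k * \<phi> k y)) * \<pi> y"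
      by (simp add: power2_eq_square sum_product)
    also have "\<dots> = (\<Sum>i\<in>I. \<Sum>k\<in>I. c i * c k * (\<phi> i y * \<phi> k y * \<pi> y))"
      unfolding sum_distrib_right by (simp add: algebra_simps)
    finally show "(\<Sum>i\<in>I. c i * \<phi> i y)\<^sup>2 * \<pi> y = (\<Sum>i\<in>I. \<Sum>k\<in>I. c i * c k * (\<phi> i y * \<phi> k y * \<pi> y))" .
  qed
  also have "\<dots> = (\<Sum>i\<in>I. \<Sum>k\<in>I. c i * c k * (\<Sum>y\<in>UNIV. \<phi> i y * \<phi> k y * \<pi> y))"
    unfolding sum_distrib_left
    by (subst sum.swap) (simp add: sum.swap[of _ I UNIV])
  also have "\<dots> = (\<Sum>i\<in>I. \<Sum>k\<in>I. c i * c k * (if i = k then 1 else 0))"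
  proof (intro sum.cong refl)
    fix i k assume "i \<in> I" "k \<in> I"
    then have "i < CARD('a)" "k < CARD('a)" using assms(2) by auto
    then show "c i * c k * (\<Sum>y\<in>UNIV. \<phi> i y * \<phi> k y * \<pi> y) = c i * c k * (if i = k then 1 else 0)"
      using assms(1) unfolding onb_def by simp
  qed
  also have "\<dots> = (\<Sum>i\<in>I. (c i)\<^sup>2)"
    using fin by (simp add: power2_eq_square if_distrib sum.delta cong: if_cong)
  finally show ?thesis .
qed

lemma onb_mpow:
  fixes Q :: "'a::finite \<Rightarrow> 'a \<Rightarrow> real"
  assumes "onb \<pi> \<phi>" "reversible Q \<pi>"
    and eig: "\<And>i x. i < CARD('a) \<Longrightarrow> (\<Sum>y\<in>UNIV. Q x y * \<phi> i y) = ev i * \<phi> i x"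
  shows "mpow Q k x y = (\<Sum>i<CARD('a). ev i ^ k * \<phi> i x * \<phi> i y * \<pi> y)"
proof (induction k arbitrary: y)
  case 0
  then show ?case using onb_complete[OF assms(1)] by simp
next
  case (Suc k)
  have "mpow Q (Suc k) x y = (\<Sum>z\<in>UNIV. (\<Sum>i<CARD('a). ev i ^ k * \<phi> i x * \<phi> i z * \<pi> z) * Q z y)"
    using Suc by simp
  also have "\<dots> = (\<Sum>i<CARD('a). ev i ^ k * \<phi> i x * \<pi> y * (\<Sum>z\<in>UNIV. Q y z * \<phi> i z))"
  proof -
    have r: "\<pi> z * Q z y = \<pi> y * Q y z" for z using assms(2) unfolding reversible_def by blast
    have "(\<Sum>z\<in>UNIV. (\<Sum>i<CARD('a). ev i ^ k * \<phi> i x * \<phi> i z * \<pi> z) * Q z y)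
        = (\<Sum>z\<in>UNIV. (\<Sum>i<CARD('a). ev i ^ k * \<phi> i x * \<phi> i z * (\<pi> z * Q z y)))"
      unfolding sum_distrib_right by (simp add: algebra_simps)
    also have "\<dots> = (\<Sum>z\<in>UNIV. (\<Sum>i<CARD('a). ev i ^ k * \<phi> i x * \<pi> y * (Q y z * \<phi> i z)))"
      unfolding r by (simp add: algebra_simps)
    also have "\<dots> = (\<Sum>i<CARD('a). ev i ^ k * \<phi> i x * \<pi> y * (\<Sum>z\<in>UNIV. Q y z * \<phi> i z))"
      unfolding sum_distrib_left by (rule sum.swap)
    finally show ?thesis .
  qed
  also have "\<dots> = (\<Sum>i<CARD('a). ev i ^ Suc k * \<phi> i x * \<phi> i y * \<pi> y)"
    by (intro sum.cong refl) (simp add: eig algebra_simps)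
  finally show ?case .
qed

lemma pow_neg_helper: "(t::real) ^ k * (- l) ^ k = (- (t * l)) ^ k"
  by (metis mult_minus_right power_mult_distrib)

lemma onb_heat:
  fixes L :: "'a::finite \<Rightarrow> 'a \<Rightarrow> real"
  assumes "onb \<pi> \<phi>" "reversible L \<pi>"
    and eig: "\<And>i x. i < CARD('a) \<Longrightarrow> (\<Sum>y\<in>UNIV. L x y * \<phi> i y) = - lam i * \<phi> i x"
  shows "heat L t x y = (\<Sum>i<CARD('a). exp (- t * lam i) * \<phi> i x * \<phi> i y * \<pi> y)"
proof -
  have eq: "(\<lambda>k. t ^ k / fact k * mpow L k x y)
      = (\<lambda>k. \<Sum>i<CARD('a). ((t * (- lam i)) ^ k /\<^sub>R fact k) * (\<phi> i x * \<phi> i y * \<pi> y))"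
  proof
    fix k
    have mp: "mpow L k x y = (\<Sum>i<CARD('a). (- lam i) ^ k * \<phi> i x * \<phi> i y * \<pi> y)"
      by (rule onb_mpow) (use assms eig in auto)
    show "t ^ k / fact k * mpow L k x y
      = (\<Sum>i<CARD('a). ((t * (- lam i)) ^ k /\<^sub>R fact k) * (\<phi> i x * \<phi> i y * \<pi> y))"
      unfolding mp sum_distrib_left
      by (intro sum.cong refl) (simp add: pow_neg_helper divide_inverse algebra_simps)
  qed
  have "(\<lambda>k. t ^ k / fact k * mpow L k x y) sums (\<Sum>i<CARD('a). exp (t * (- lam i)) * (\<phi> i x * \<phi> i y * \<pi> y))"
    unfolding eq by (intro sums_sum sums_mult2 exp_converges)
  then show ?thesis unfolding heat_def by (simp add: sums_unique[symmetric] mult.assoc)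
qed

lemma card_pos_univ: "0 < CARD('a::finite)" by simp

lemma lessThan_split0: "0 < (n::nat) \<Longrightarrow> {..<n} = insert 0 {1..<n}" by (auto simp: not_le)

lemma d2_generic:
  fixes \<mu> \<pi> :: "'a::finite \<Rightarrow> real"
  assumes onb: "onb \<pi> \<phi>" and phi0: "\<phi> 0 = (\<lambda>x. 1)"
    and w0: "w 0 * mu_of \<mu> (\<phi> 0) = 1"
    and M: "\<And>x y. M x y = (\<Sum>i<CARD('a). w i * \<phi> i x * \<phi> i y * \<pi> y)"
  shows "l2norm \<pi> (\<lambda>y. (\<Sum>x\<in>UNIV. \<mu> x * M x y) / \<pi> y - 1)
       = sqrt (\<Sum>i\<in>{1..<CARD('a)}. (w i * mu_of \<mu> (\<phi> i))\<^sup>2)"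
proof -
  have pos: "0 < \<pi> y" for y using onb unfolding onb_def by auto
  have "(\<Sum>x\<in>UNIV. \<mu> x * M x y) / \<pi> y - 1 = (\<Sum>i\<in>{1..<CARD('a)}. (w i * mu_of \<mu> (\<phi> i)) * \<phi> i y)" for y
  proof -
    have "(\<Sum>x\<in>UNIV. \<mu> x * M x y) = (\<Sum>x\<in>UNIV. \<Sum>i<CARD('a). \<mu> x * (w i * \<phi> i x * \<phi> i y * \<pi> y))"
      unfolding M sum_distrib_left by simp
    also have "\<dots> = \<pi> y * (\<Sum>i<CARD('a). w i * mu_of \<mu> (\<phi> i) * \<phi> i y)"
      unfolding mu_of_def sum_distrib_left sum_distrib_right
      by (subst sum.swap) (intro sum.cong refl, simp add: algebra_simps)
    finally have "(\<Sum>x\<in>UNIV. \<mu> x * M x y) / \<pi> y = (\<Sum>i<CARD('a). w i * mu_of \<mu> (\<phi> i) * \<phi> i y)"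
      using pos[of y] by simp
    also have "\<dots> = 1 + (\<Sum>i\<in>{1..<CARD('a)}. w i * mu_of \<mu> (\<phi> i) * \<phi> i y)"
      by (subst lessThan_split0[OF card_pos_univ]) (simp add: phi0 w0[unfolded phi0])
    finally show ?thesis by simp
  qed
  moreover have sub: "{1..<CARD('a)} \<subseteq> {..<CARD('a)}" by auto
  ultimately show ?thesis unfolding l2norm_def
    using onb_norm[OF onb sub, of "\<lambda>i. w i * mu_of \<mu> (\<phi> i)"] by simp
qed

lemma mu_of_1: "prob_vec \<mu> \<Longrightarrow> mu_of \<mu> (\<lambda>x. 1) = 1"
  unfolding prob_vec_def mu_of_def by simp

lemma pi_sq_formula:
  fixes \<mu> \<pi> :: "'a::finite \<Rightarrow> real"
  assumes onb: "onb \<pi> \<phi>"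
  shows "pi_sq \<pi> (\<lambda>y. \<mu> y / \<pi> y) = (\<Sum>i<CARD('a). (mu_of \<mu> (\<phi> i))\<^sup>2)"
proof -
  have pos: "0 < \<pi> y" for y using onb unfolding onb_def by auto
  have co: "(\<Sum>y\<in>UNIV. \<mu> y / \<pi> y * \<phi> i y * \<pi> y) = mu_of \<mu> (\<phi> i)" for i
    unfolding mu_of_def using pos by (intro sum.cong refl) (simp add: less_imp_neq[symmetric])
  have ex: "\<mu> y / \<pi> y = (\<Sum>i<CARD('a). mu_of \<mu> (\<phi> i) * \<phi> i y)" for y
    using onb_expand[OF onb, of "\<lambda>y. \<mu> y / \<pi> y" y] unfolding co .
  have "pi_sq \<pi> (\<lambda>y. \<mu> y / \<pi> y) = (\<Sum>y\<in>UNIV. (\<Sum>i<CARD('a). mu_of \<mu> (\<phi> i) * \<phi> i y)\<^sup>2 * \<pi> y)"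
    unfolding pi_sq_def ex[symmetric] ..
  also have "\<dots> = (\<Sum>i<CARD('a). (mu_of \<mu> (\<phi> i))\<^sup>2)"
    by (rule onb_norm[OF onb]) simp
  finally show ?thesis .
qed

lemma pi_sq_minus1:
  fixes \<mu> \<pi> :: "'a::finite \<Rightarrow> real"
  assumes "pos_prob_vec \<pi>" "prob_vec \<mu>"
  shows "pi_sq \<pi> (\<lambda>y. \<mu> y / \<pi> y - 1) = pi_sq \<pi> (\<lambda>y. \<mu> y / \<pi> y) - 1"
proof -
  have pos: "0 < \<pi> y" for y using assms unfolding pos_prob_vec_def by auto
  have "pi_sq \<pi> (\<lambda>y. \<mu> y / \<pi> y - 1) = (\<Sum>y\<in>UNIV. (\<mu> y / \<pi> y)\<^sup>2 * \<pi> y - 2 * \<mu> y + \<pi> y)"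
    unfolding pi_sq_def using pos
    by (intro sum.cong refl) (simp add: power2_eq_square field_simps less_imp_neq[symmetric])
  also have "\<dots> = pi_sq \<pi> (\<lambda>y. \<mu> y / \<pi> y) - 1"
    using assms unfolding pi_sq_def pos_prob_vec_def prob_vec_def
    by (simp add: sum.distrib sum_subtractf sum_distrib_left[symmetric])
  finally show ?thesis .
qed

lemma spec_sum_total:
  fixes \<pi> :: "'a::finite \<Rightarrow> real"
  assumes "onb \<pi> \<phi>" "prob_vec \<mu>" "\<phi> 0 = (\<lambda>x. 1)"
  shows "pi_sq \<pi> (\<lambda>y. \<mu> y / \<pi> y) - 1 = spec_sum \<mu> \<phi> (CARD('a::finite) - 1)"
proof -
  have "{..<CARD('a)} = insert 0 {1..CARD('a) - 1}" using card_pos_univ[where 'a='a] by auto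
  then show ?thesis
    unfolding pi_sq_formula[OF assms(1)] spec_sum_def
    using assms(2,3) by (simp add: mu_of_1)
qed

lemma exists_max:
  fixes f :: "'a::finite \<Rightarrow> real"
  obtains x0 where "\<And>y. f y \<le> f x0"
proof -
  have "Max (range f) \<in> range f" by (rule Max_in) auto
  then obtain x0 where "f x0 = Max (range f)" by (metis imageE)
  moreover have le: "f y \<le> Max (range f)" for y by (rule Max_ge) auto
  ultimately show ?thesis using that[of x0] by simp
qed

lemma harmonic_const:
  fixes L :: "'a::finite \<Rightarrow> 'a \<Rightarrow> real"
  assumes gen: "generator L" and irr: "irreducible_kernel L"
    and h: "\<And>x. (\<Sum>y\<in>UNIV. L x y * f y) = 0"
  shows "f x = f y"
proof -
  obtain x0 where mx: "\<And>y. f y \<le> f x0" using exists_max by blast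
  define R where "R = {(a, b). a \<noteq> b \<and> 0 < L a b}"
  have stp: "f b = f x0" if "f a = f x0" "(a, b) \<in> R" for a b
  proof -
    have ab: "a \<noteq> b" "0 < L a b" using that(2) R_def by auto
    have "(\<Sum>y\<in>UNIV. L a y * (f y - f a)) = (\<Sum>y\<in>UNIV. L a y * f y) - f a * (\<Sum>y\<in>UNIV. L a y)"
      by (simp add: algebra_simps sum_subtractf sum_distrib_left)
    also have "\<dots> = 0" using h gen unfolding generator_def by simp
    finally have s0: "(\<Sum>y\<in>UNIV. - (L a y * (f y - f a))) = 0" by (simp add: sum_negf)
    have nn: "0 \<le> - (L a y * (f y - f a))" for y
    proof (cases "y = a")
      case False
      then have "0 \<le> L a y" using gen unfolding generator_def by auto
      moreover have "f y - f a \<le> 0" using mx[of y] that(1) by simp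
      ultimately show ?thesis by (simp add: mult_nonneg_nonpos)
    qed simp
    have "- (L a b * (f b - f a)) = 0"
      using iffD1[OF sum_nonneg_eq_0_iff s0] nn by auto
    then show ?thesis using ab that(1) by simp
  qed
  have all: "f z = f x0" if "(x0, z) \<in> R\<^sup>*" for z
    using that
  proof (induction rule: rtrancl_induct)
    case base then show ?case by simp
  next
    case (step y z) then show ?case using stp by blast
  qed
  have "(x0, x) \<in> R\<^sup>*" "(x0, y) \<in> R\<^sup>*" using irr unfolding irreducible_kernel_def R_def by auto
  then show ?thesis using all by metis
qed

lemma ct_lam_pos:
  fixes L :: "'a::finite \<Rightarrow> 'a \<Rightarrow> real"
  assumes gen: "generator L" and irr: "irreducible_kernel L" and pp: "pos_prob_vec \<pi>"
    and sp: "ct_spectral L \<pi> lam \<phi>" and i: "1 \<le> i" "i < CARD('a)"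
  shows "0 < lam i"
proof (rule ccontr)
  assume "\<not> 0 < lam i"
  moreover have o: "\<forall>i j. i \<le> j \<and> j < CARD('a) \<longrightarrow> lam i \<le> lam j" "lam 0 = 0"
    using sp unfolding ct_spectral_def by auto
  moreover have "lam 0 \<le> lam i" using o(1)[rule_format, of 0 i] i by simp
  ultimately have l0: "lam i = 0" by simp
  have h: "(\<Sum>y\<in>UNIV. L x y * \<phi> i y) = 0" for x using sp i l0 unfolding ct_spectral_def by auto
  obtain x0 :: 'a where True by blast
  have c: "\<phi> i x = \<phi> i x0" for x using harmonic_const[OF gen irr h] .
  have "(\<Sum>x\<in>UNIV. \<phi> 0 x * \<phi> i x * \<pi> x) = 0"
  proof -
    have "\<forall>i<CARD('a). \<forall>k<CARD('a). (\<Sum>x\<in>UNIV. \<phi> i x * \<phi> k x * \<pi> x) = (if i = k then 1 else 0)"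
      using sp unfolding ct_spectral_def by blast
    then show ?thesis using i by (metis card_pos_univ not_one_le_zero)
  qed
  moreover have "(\<Sum>x\<in>UNIV. \<phi> 0 x * \<phi> i x * \<pi> x) = \<phi> i x0 * (\<Sum>x\<in>UNIV. \<pi> x)"
  proof -
    have p0: "\<phi> 0 = (\<lambda>x. 1)" using sp unfolding ct_spectral_def by blast
    show ?thesis unfolding sum_distrib_left
      by (intro sum.cong refl) (simp add: p0, metis c)
  qed
  ultimately have "\<phi> i x0 * (\<Sum>x\<in>UNIV. \<pi> x) = 0" by simp
  then have z: "\<phi> i x0 = 0" using pp unfolding pos_prob_vec_def by simp
  have "(\<Sum>x\<in>UNIV. \<phi> i x * \<phi> i x * \<pi> x) = 1" using sp i unfolding ct_spectral_def by auto
  then show False using c z by simp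
qed

lemma dt_beta_le1:
  fixes K :: "'a::finite \<Rightarrow> 'a \<Rightarrow> real"
  assumes st: "stochastic K" and sp: "dt_spectral K \<pi> \<beta> \<phi>" and i: "i < CARD('a)"
  shows "\<bar>\<beta> i\<bar> \<le> 1"
proof -
  obtain x0 where mx: "\<And>y. \<bar>\<phi> i y\<bar> \<le> \<bar>\<phi> i x0\<bar>" using exists_max[of "\<lambda>y. \<bar>\<phi> i y\<bar>"] by blast
  have nz: "\<phi> i x0 \<noteq> 0"
  proof
    assume "\<phi> i x0 = 0"
    then have "\<phi> i y = 0" for y using mx[of y] by simp
    moreover have "(\<Sum>x\<in>UNIV. \<phi> i x * \<phi> i x * \<pi> x) = 1" using sp i unfolding dt_spectral_def by auto
    ultimately show False by simp
  qed
  have "\<bar>\<beta> i\<bar> * \<bar>\<phi> i x0\<bar> = \<bar>\<Sum>y\<in>UNIV. K x0 y * \<phi> i y\<bar>"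
    using sp i unfolding dt_spectral_def by (simp add: abs_mult)
  also have "\<dots> \<le> (\<Sum>y\<in>UNIV. K x0 y * \<bar>\<phi> i x0\<bar>)"
    by (rule order_trans[OF sum_abs]) (use st mx in \<open>auto simp: stochastic_def abs_mult intro!: sum_mono mult_left_mono\<close>)
  also have "\<dots> = \<bar>\<phi> i x0\<bar>" using st unfolding stochastic_def by (simp add: sum_distrib_right[symmetric])
  finally show ?thesis using nz by simp
qed



lemma amgm_powr:
  fixes x p :: real
  assumes "0 \<le> x" "0 < p" "p < 1"
  shows "x powr p \<le> p * x + (1 - p)"
proof (cases "x = 0")
  case True then show ?thesis using assms by simp
next
  case False
  then have x: "0 < x" using assms by simp
  have "exp ((1 - p) *\<^sub>R 0 + p *\<^sub>R ln x) \<le> (1 - p) * exp 0 + p * exp (ln x)"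
    by (rule convex_onD[OF exp_convex]) (use assms in auto)
  then show ?thesis using x by (simp add: powr_def algebra_simps)
qed

lemma concave_step:
  fixes u w p :: real
  assumes "0 \<le> w" "w \<le> u" "0 < u" "0 < p" "p < 1"
  shows "p * u powr (p - 1) * (u - w) \<le> u powr p - w powr p"
proof -
  define x where "x = w / u"
  have x: "0 \<le> x" "w = x * u" using assms by (auto simp: x_def)
  have "w powr p = x powr p * u powr p" using x by (simp add: powr_mult)
  also have "\<dots> \<le> (p * x + (1 - p)) * u powr p"
    by (rule mult_right_mono[OF amgm_powr]) (use assms x in auto)
  finally have h: "w powr p \<le> (p * x + (1 - p)) * u powr p" .
  have up: "u powr p = u * u powr (p - 1)"
    using assms by (simp add: powr_diff)
  have "p * u powr (p - 1) * (u - w) = p * u powr p - p * x * u powr p"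
    using up x by (simp add: algebra_simps)
  also have "\<dots> \<le> u powr p - w powr p" using h by (simp add: algebra_simps)
  finally show ?thesis .
qed

lemma key_step:
  fixes u w p T :: real
  assumes "0 \<le> w" "w \<le> u" "0 < p" "p < 1" "T * u powr (1 - p) \<le> 1"
  shows "T * (u - w) \<le> (u powr p - w powr p) / p"
proof (cases "u = 0")
  case True then show ?thesis using assms by simp
next
  case False
  then have u: "0 < u" using assms by simp
  have "u powr (1 - p) * u powr (p - 1) = 1" using u by (simp add: powr_add[symmetric])
  then have "T \<le> u powr (p - 1)"
    using assms(5) mult_right_mono[OF assms(5) powr_ge_zero[of u "p - 1"]] by (simp add: mult.assoc)
  then have "T * (u - w) \<le> u powr (p - 1) * (u - w)"
    using assms by (intro mult_right_mono) auto
  also have "\<dots> \<le> (u powr p - w powr p) / p"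
    using concave_step[OF assms(1,2) u assms(3,4)] assms(3) by (simp add: field_simps)
  finally show ?thesis .
qed

lemma tail_bound:
  fixes a u T :: "nat \<Rightarrow> real" and p :: real
  assumes j0: "1 \<le> j0" "j0 \<le> J"
    and a: "\<And>j. j0 \<le> j \<Longrightarrow> j \<le> J \<Longrightarrow> a j = T j - T (j - 1)"
    and T0: "0 \<le> T (j0 - 1)"
    and u0: "\<And>j. 0 \<le> u j"
    and um: "\<And>j. j0 \<le> j \<Longrightarrow> j < J \<Longrightarrow> u (Suc j) \<le> u j"
    and p: "0 < p" "p < 1"
    and c: "\<And>j. j0 \<le> j \<Longrightarrow> j \<le> J \<Longrightarrow> T j * u j powr (1 - p) \<le> 1"
  shows "(\<Sum>j=j0..J. a j * u j) \<le> u j0 powr p / p"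
proof -
  have claim: "(\<Sum>j=K..J. a j * u j) \<le> u K powr p / p - T (K - 1) * u K" if "j0 \<le> K" "K \<le> J" for K
    using that(2,1)
  proof (induction K rule: inc_induct)
    case base
    have "T J * u J = T J * (u J - 0)" by simp
    also have "\<dots> \<le> (u J powr p - 0 powr p) / p"
      by (rule key_step) (use u0 p c base j0 in auto)
    finally have h: "T J * u J \<le> u J powr p / p" by simp
    have "a J = T J - T (J - 1)" using a[of J] j0 by simp
    then have "a J * u J = T J * u J - T (J - 1) * u J" by (simp add: left_diff_distrib)
    then show ?case using h by simp
  next
    case (step n)
    have "(\<Sum>j=n..J. a j * u j) = a n * u n + (\<Sum>j=Suc n..J. a j * u j)"
      using step.hyps by (simp add: sum.atLeast_Suc_atMost)
    also have "\<dots> \<le> a n * u n + (u (Suc n) powr p / p - T n * u (Suc n))"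
      using step.IH step.prems step.hyps by simp
    also have "\<dots> = T n * (u n - u (Suc n)) + u (Suc n) powr p / p - T (n - 1) * u n"
    proof -
      have an: "a n = T n - T (n - 1)" using a[of n] step by simp
      show ?thesis by (subst an) (simp add: algebra_simps)
    qed
    also have "\<dots> \<le> (u n powr p - u (Suc n) powr p) / p + u (Suc n) powr p / p - T (n - 1) * u n"
      using key_step[of "u (Suc n)" "u n" p "T n"] u0 um[of n] p c[of n] step by auto
    also have "\<dots> = u n powr p / p - T (n - 1) * u n" by (simp add: diff_divide_distrib)
    finally show ?case .
  qed
  have "(\<Sum>j=j0..J. a j * u j) \<le> u j0 powr p / p - T (j0 - 1) * u j0" using claim j0 by simp
  also have "\<dots> \<le> u j0 powr p / p" using T0 u0[of j0] by simp
  finally show ?thesis .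
qed

lemma split_bound:
  fixes a u :: "nat \<Rightarrow> real"
  assumes a0: "\<And>i. 0 \<le> a i"
    and j0: "1 \<le> j0" "j0 \<le> N"
    and Sc: "(\<Sum>i=1..j0-1. a i) \<le> c"
    and u0: "\<And>j. 0 \<le> u j"
    and u1: "\<And>i. 1 \<le> i \<Longrightarrow> i < j0 \<Longrightarrow> u i \<le> 1"
    and um: "\<And>j. j0 \<le> j \<Longrightarrow> j < N \<Longrightarrow> u (Suc j) \<le> u j"
    and p: "0 < p" "p < 1"
    and cond: "\<And>j. j0 \<le> j \<Longrightarrow> j \<le> N \<Longrightarrow> (1 + (\<Sum>i=1..j. a i)) * u j powr (1 - p) \<le> 1"
  shows "(\<Sum>i=1..N. a i * u i) \<le> c + u j0 powr p / p"
proof -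
  have un: "{1..N} = {1..j0-1} \<union> {j0..N}" using j0 by auto
  have "(\<Sum>i=1..N. a i * u i) = (\<Sum>i=1..j0-1. a i * u i) + (\<Sum>i=j0..N. a i * u i)"
    unfolding un by (rule sum.union_disjoint) auto
  also have "(\<Sum>i=1..j0-1. a i * u i) \<le> (\<Sum>i=1..j0-1. a i)"
  proof (rule sum_mono)
    fix i assume "i \<in> {1..j0-1}"
    then have "u i \<le> 1" using u1 j0 by auto
    then show "a i * u i \<le> a i" using a0[of i] by (simp add: mult_left_le)
  qed
  also have "(\<Sum>i=j0..N. a i * u i) \<le> u j0 powr p / p"
  proof (rule tail_bound[where T="\<lambda>j. 1 + (\<Sum>i=1..j. a i)"])
    show "a j = (1 + sum a {1..j}) - (1 + sum a {1..j - 1})" if "j0 \<le> j" "j \<le> N" for j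
    proof -
      have "{1..j} = insert j {1..j-1}" using that j0 by auto
      moreover have "j \<notin> {1..j-1}" using that j0 by auto
      ultimately show ?thesis by simp
    qed
    show "0 \<le> 1 + sum a {1..j0 - 1}" using a0 by (simp add: sum_nonneg add_nonneg_nonneg)
  qed (use j0 u0 um p cond in auto)
  finally show ?thesis using Sc by simp
qed

lemma weight_bound:
  fixes a w :: "nat \<Rightarrow> real"
  assumes a0: "\<And>i. 0 \<le> a i"
    and j: "1 \<le> j" "j \<le> N"
    and w0: "\<And>i. 1 \<le> i \<Longrightarrow> i \<le> N \<Longrightarrow> 0 \<le> w i"
    and wm: "\<And>i. 1 \<le> i \<Longrightarrow> i \<le> j \<Longrightarrow> w j \<le> w i"
    and c: "0 < c" "c < (\<Sum>i=1..j. a i)"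
    and D: "(\<Sum>i=1..N. w i * a i) \<le> c / (1 + c)"
  shows "w j * (1 + (\<Sum>i=1..j. a i)) < 1"
proof -
  define S where "S = (\<Sum>i=1..j. a i)"
  have "w j * S = (\<Sum>i=1..j. w j * a i)" unfolding S_def by (simp add: sum_distrib_left)
  also have "\<dots> \<le> (\<Sum>i=1..j. w i * a i)"
    by (rule sum_mono) (use wm a0 in \<open>auto intro: mult_right_mono\<close>)
  also have "\<dots> \<le> (\<Sum>i=1..N. w i * a i)"
    by (rule sum_mono2) (use j w0 a0 in auto)
  also have "\<dots> \<le> c / (1 + c)" by (rule D)
  finally have h: "w j * S \<le> c / (1 + c)" .
  have Sp: "c < S" using c S_def by simp
  have "c / (1 + c) < S / (1 + S)" using Sp c by (simp add: field_simps)
  with h have "w j * S < S / (1 + S)" by simp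
  then have "w j * S * (1 + S) < S" using Sp c by (simp add: less_divide_eq)
  then have "(w j * (1 + S)) * S < 1 * S" by (simp add: algebra_simps)
  then have "w j * (1 + S) < 1" using Sp c mult_less_cancel_right_pos[of S "w j * (1 + S)" 1] by linarith
  then show ?thesis unfolding S_def .
qed

lemma poly_ineq:
  fixes z :: real
  assumes "2 \<le> z"
  shows "12 * z^3 * (8*z+4)^2 \<le> (6*z^2 - 1) * (6*z^2 + 8*z + 3)^2"
proof -
  define s where "s = z - 2"
  have s: "0 \<le> s" using assms s_def by simp
  have z: "z = s + 2" using s_def by simp
  have "(6*z^2 - 1) * (6*z^2 + 8*z + 3)^2 - 12 * z^3 * (8*z+4)^2
      = 4127 + 19352 * s + 31538 * s ^ 2 + 25248 * s ^ 3 + 10836 * s ^ 4 + 2400 * s ^ 5 + 216 * s ^ 6"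
    unfolding z by algebra
  also have "\<dots> \<ge> 0" using s by (intro add_nonneg_nonneg) auto
  finally show ?thesis by simp
qed

lemma ln_lower: "0 \<le> (y::real) \<Longrightarrow> y / (1 + y) \<le> ln (1 + y)"
proof -
  assume y: "0 \<le> y"
  have "ln (1 / (1 + y)) \<le> 1 / (1 + y) - 1" by (rule ln_le_minus_one) (use y in simp)
  then show ?thesis using y by (simp add: ln_div field_simps)
qed

lemma eps_choice:
  fixes \<epsilon> \<alpha> :: real
  assumes e: "0 < \<epsilon>" "\<epsilon>\<^sup>2 < 1/2" and a: "0 < \<alpha>" "ln (1 + \<epsilon>\<^sup>2 / 2) \<le> 2 * \<alpha>\<^sup>2"
  defines "A \<equiv> (6 / \<epsilon> ^ 4 - 1) * \<alpha>"
  shows "0 < A" "(\<alpha> + A) / \<alpha> = 6 / \<epsilon> ^ 4" "(A + \<alpha>) / (A * exp (\<alpha> * A)) \<le> \<epsilon>\<^sup>2 / 2"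
proof -
  define z where "z = 1 / \<epsilon>\<^sup>2"
  have z2: "2 < z" using e by (simp add: z_def field_simps)
  have e4: "6 / \<epsilon> ^ 4 = 6 * z^2" unfolding z_def by (simp add: power_divide field_simps flip: power_mult)
  define k where "k = 6 * z^2 - 1"
  have "2^2 < z^2" by (rule power_strict_mono) (use z2 in auto)
  then have k: "A = k * \<alpha>" "1 < k" unfolding A_def e4 k_def by auto
  show "0 < A" using k a by simp
  show "(\<alpha> + A) / \<alpha> = 6 / \<epsilon> ^ 4" unfolding k e4 k_def using a by (simp add: field_simps)
  have eps2: "\<epsilon>\<^sup>2 = 1 / z" using e unfolding z_def by simp
  have "1 / (2 * z + 1) = (1/(2*z)) / (1 + 1/(2*z))" using z2 by (simp add: field_simps)
  also have "\<dots> \<le> ln (1 + 1/(2*z))" by (rule ln_lower) (use z2 in simp)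
  also have "\<dots> = ln (1 + \<epsilon>\<^sup>2 / 2)" by (simp add: eps2 mult.commute)
  finally have "1 / (2 * z + 1) \<le> 2 * \<alpha>\<^sup>2" using a by simp
  then have "(k/2) * (1 / (2 * z + 1)) \<le> (k/2) * (2 * \<alpha>\<^sup>2)"
    by (rule mult_left_mono) (use k in simp)
  moreover have "k / (4 * z + 2) = (k/2) * (1 / (2 * z + 1))" using z2 by (simp add: field_simps)
  ultimately have "k / (4 * z + 2) \<le> (k/2) * (2 * \<alpha>\<^sup>2)" by linarith
  moreover have "(k/2) * (2 * \<alpha>\<^sup>2) = k * \<alpha>\<^sup>2" by simp
  ultimately have w: "k / (4 * z + 2) \<le> k * \<alpha>\<^sup>2" by linarith
  define w where "w = k / (4 * z + 2)"
  have "(1 + w / 2)^2 \<le> exp (w / 2) ^ 2"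
    by (rule power_mono) (use z2 k in \<open>auto simp: w_def intro: exp_ge_add_one_self\<close>)
  also have "\<dots> = exp w" by (simp flip: exp_of_nat_mult)
  also have "\<dots> \<le> exp (\<alpha> * A)" using w unfolding w_def k by (simp add: power2_eq_square mult_ac)
  finally have ex: "(1 + w / 2)^2 \<le> exp (\<alpha> * A)" .
  have "1 + w / 2 = (6*z^2 + 8*z + 3) / (8*z+4)" using z2 by (simp add: w_def k_def field_simps)
  then have wq: "(1 + w/2)^2 = (6*z^2 + 8*z + 3)^2 / (8*z+4)^2" by (simp add: power_divide)
  have pi: "12 * z^3 * (8*z+4)^2 \<le> k * (6*z^2 + 8*z + 3)^2"
    using poly_ineq[of z] z2 k_def by simp
  have Qp: "0 < (8*z+4)^2" using z2 by simp
  have "12 * z^3 = 12 * z^3 * (8*z+4)^2 / (8*z+4)^2" using Qp by simp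
  also have "\<dots> \<le> k * (6*z^2 + 8*z + 3)^2 / (8*z+4)^2"
    by (rule divide_right_mono[OF pi]) (use Qp in simp)
  also have "\<dots> = k * (1 + w/2)^2" by (simp add: wq)
  also have "\<dots> \<le> k * exp (\<alpha> * A)" using ex k by simp
  finally have main: "12 * z^3 \<le> k * exp (\<alpha> * A)" .
  define E where "E = exp (\<alpha> * A)"
  have Ep: "0 < E" unfolding E_def by simp
  have main2: "(k + 1) * (2 * z) \<le> k * E" using main unfolding E_def k_def
    by (simp add: power2_eq_square power3_eq_cube algebra_simps)
  have "(A + \<alpha>) / (A * exp (\<alpha> * A)) = (\<alpha> * (k + 1)) / (\<alpha> * (k * E))"
  proof -
    have Eeq: "exp (\<alpha> * A) = E" by (simp add: E_def)
    show ?thesis unfolding Eeq unfolding k(1) by (simp add: algebra_simps)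
  qed
  also have "\<dots> = (k + 1) / (k * E)" using a by simp
  also have "\<dots> \<le> 1 / (2 * z)"
  proof -
    have "(k + 1) / (k * E) = ((k + 1) * (2 * z)) / (k * E) / (2 * z)" using z2 by simp
    also have "\<dots> \<le> 1 / (2 * z)"
      by (rule divide_right_mono) (use main2 Ep k z2 in auto)
    finally show ?thesis .
  qed
  also have "\<dots> = \<epsilon>\<^sup>2 / 2" using eps2 by simp
  finally show "(A + \<alpha>) / (A * exp (\<alpha> * A)) \<le> \<epsilon>\<^sup>2 / 2" .
qed



lemma exp_powr: "exp (x::real) powr y = exp (x * y)"
  by (simp add: powr_def mult.commute)

lemma jc_props:
  assumes c: "0 < c" "c < spec_sum \<mu> \<phi> N"
  shows "1 \<le> jc \<mu> \<phi> c" "jc \<mu> \<phi> c \<le> N" "c < spec_sum \<mu> \<phi> (jc \<mu> \<phi> c)"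
    "spec_sum \<mu> \<phi> (jc \<mu> \<phi> c - 1) \<le> c"
proof -
  have N1: "1 \<le> N"
  proof (rule ccontr)
    assume "\<not> 1 \<le> N" then have "N = 0" by simp
    then show False using c by (simp add: spec_sum_def)
  qed
  have ex: "1 \<le> N \<and> c < spec_sum \<mu> \<phi> N" using N1 c by simp
  show "1 \<le> jc \<mu> \<phi> c" "c < spec_sum \<mu> \<phi> (jc \<mu> \<phi> c)"
    using LeastI[of "\<lambda>j. 1 \<le> j \<and> c < spec_sum \<mu> \<phi> j", OF ex] unfolding jc_def by auto
  show "jc \<mu> \<phi> c \<le> N" unfolding jc_def by (rule Least_le) (rule ex)
  show "spec_sum \<mu> \<phi> (jc \<mu> \<phi> c - 1) \<le> c"
  proof (cases "jc \<mu> \<phi> c - 1 = 0")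
    case True then show ?thesis using c by (simp add: spec_sum_def)
  next
    case False
    then have "jc \<mu> \<phi> c - 1 < jc \<mu> \<phi> c" by simp
    then have "\<not> (1 \<le> jc \<mu> \<phi> c - 1 \<and> c < spec_sum \<mu> \<phi> (jc \<mu> \<phi> c - 1))"
      unfolding jc_def by (rule not_less_Least)
    then show ?thesis using False by auto
  qed
qed

locale ct_setting =
  fixes L :: "'a::finite \<Rightarrow> 'a \<Rightarrow> real" and \<pi> \<mu> :: "'a \<Rightarrow> real"
    and lam :: "nat \<Rightarrow> real" and \<phi> :: "nat \<Rightarrow> 'a \<Rightarrow> real"
  assumes gen: "generator L" and irr: "irreducible_kernel L" and pp: "pos_prob_vec \<pi>"
    and rev: "reversible L \<pi>" and pm: "prob_vec \<mu>" and sp: "ct_spectral L \<pi> lam \<phi>"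
begin

definition "a i = (mu_of \<mu> (\<phi> i))\<^sup>2"
definition "D t = (\<Sum>i=1..(CARD('a) - 1). exp (- 2 * t * lam i) * a i)"

lemma onb: "onb \<pi> \<phi>"
  using pp sp unfolding onb_def pos_prob_vec_def ct_spectral_def by auto

lemma phi0: "\<phi> 0 = (\<lambda>x. 1)" using sp unfolding ct_spectral_def by auto
lemma lam0: "lam 0 = 0" using sp unfolding ct_spectral_def by auto

lemma a_nonneg: "0 \<le> a i" unfolding a_def by simp

lemma S_eq: "spec_sum \<mu> \<phi> j = (\<Sum>i=1..j. a i)" unfolding spec_sum_def a_def ..

lemma lam_mono: "i \<le> j \<Longrightarrow> j \<le> (CARD('a) - 1) \<Longrightarrow> lam i \<le> lam j"
proof -
  assume h: "i \<le> j" "j \<le> CARD('a) - 1"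
  have o: "\<forall>i j. i \<le> j \<and> j < CARD('a) \<longrightarrow> lam i \<le> lam j" using sp unfolding ct_spectral_def by blast
  have "j < CARD('a)" using h(2) card_pos_univ[where 'a='a] by linarith
  then show ?thesis using o h(1) by blast
qed

lemma lam_pos: "1 \<le> i \<Longrightarrow> i \<le> (CARD('a) - 1) \<Longrightarrow> 0 < lam i"
  by (rule ct_lam_pos[OF gen irr pp sp]) (use card_pos_univ[where 'a='a] in auto)

lemma lam_nonneg: "i \<le> (CARD('a) - 1) \<Longrightarrow> 0 \<le> lam i"
  using lam_mono[of 0 i] lam0 by simp

lemma P_eq: "pi_sq \<pi> (\<lambda>y. \<mu> y / \<pi> y) - 1 = spec_sum \<mu> \<phi> (CARD('a) - 1)"
  by (rule spec_sum_total[OF onb pm phi0])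

lemma P_eq2: "pi_sq \<pi> (\<lambda>y. \<mu> y / \<pi> y - 1) = spec_sum \<mu> \<phi> (CARD('a) - 1)"
  using pi_sq_minus1[OF pp pm] P_eq by simp

lemma d2_eq: "d2_ct L \<pi> \<mu> t = sqrt (D t)"
proof -
  have eig: "\<And>i x. i < CARD('a) \<Longrightarrow> (\<Sum>y\<in>UNIV. L x y * \<phi> i y) = - lam i * \<phi> i x"
    using sp unfolding ct_spectral_def by auto
  have "d2_ct L \<pi> \<mu> t = sqrt (\<Sum>i\<in>{1..<CARD('a)}. (exp (- t * lam i) * mu_of \<mu> (\<phi> i))\<^sup>2)"
    unfolding d2_ct_def
  proof (rule d2_generic[OF onb phi0])
    show "exp (- t * lam 0) * mu_of \<mu> (\<phi> 0) = 1" using lam0 pm phi0 by (simp add: mu_of_1)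
    show "heat L t x y = (\<Sum>i<CARD('a). exp (- t * lam i) * \<phi> i x * \<phi> i y * \<pi> y)" for x y
      by (rule onb_heat[OF onb rev eig])
  qed
  also have "{1..<CARD('a)} = {1..(CARD('a) - 1)}" using card_pos_univ[where 'a='a] by auto
  also have "(\<Sum>i\<in>{1..(CARD('a) - 1)}. (exp (- t * lam i) * mu_of \<mu> (\<phi> i))\<^sup>2) = D t"
    unfolding D_def a_def
    by (intro sum.cong refl) (simp add: power_mult_distrib exp_of_nat_mult[symmetric] power2_eq_square exp_add[symmetric])
  finally show ?thesis .
qed


lemma D_nonneg: "0 \<le> D t"
  unfolding D_def by (intro sum_nonneg) (simp add: a_nonneg)

definition "Tset \<theta> = {t. 0 \<le> t \<and> d2_ct L \<pi> \<mu> t \<le> \<theta>}"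

lemma T2_def': "T2_ct L \<pi> \<mu> \<theta> = Inf (Tset \<theta>)"
  unfolding T2_ct_def Tset_def ..

lemma in_Tset: "0 \<le> t \<Longrightarrow> 0 \<le> \<theta> \<Longrightarrow> D t \<le> \<theta>\<^sup>2 \<Longrightarrow> t \<in> Tset \<theta>"
  unfolding Tset_def d2_eq using real_sqrt_le_mono[of "D t" "\<theta>\<^sup>2"] by simp

lemma Tset_D: "t \<in> Tset \<theta> \<Longrightarrow> 0 \<le> t \<and> D t \<le> \<theta>\<^sup>2"
proof -
  assume "t \<in> Tset \<theta>"
  then have h: "0 \<le> t" "sqrt (D t) \<le> \<theta>" unfolding Tset_def d2_eq by auto
  then have "(sqrt (D t))\<^sup>2 \<le> \<theta>\<^sup>2" by (intro power_mono) (auto simp: D_nonneg)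
  then show ?thesis using h D_nonneg[of t] by simp
qed

lemma bdd: "bdd_below (Tset \<theta>)"
  unfolding Tset_def by (rule bdd_belowI[of _ 0]) auto

lemma T2_le: "t \<in> Tset \<theta> \<Longrightarrow> T2_ct L \<pi> \<mu> \<theta> \<le> t"
  unfolding T2_def' by (rule cInf_lower[OF _ bdd])

lemma T2_ge: "Tset \<theta> \<noteq> {} \<Longrightarrow> (\<And>t. t \<in> Tset \<theta> \<Longrightarrow> x \<le> t) \<Longrightarrow> x \<le> T2_ct L \<pi> \<mu> \<theta>"
  unfolding T2_def' by (rule cInf_greatest)

lemma T2_mono: "Tset \<theta>1 \<noteq> {} \<Longrightarrow> \<theta>1 \<le> \<theta>2 \<Longrightarrow> T2_ct L \<pi> \<mu> \<theta>2 \<le> T2_ct L \<pi> \<mu> \<theta>1"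
  unfolding T2_def' by (rule cInf_superset_mono[OF _ bdd]) (auto simp: Tset_def)

lemma Tset_nonempty:
  assumes th: "0 < \<theta>" and N1: "1 \<le> CARD('a) - 1"
  shows "Tset \<theta> \<noteq> {}"
proof -
  define S where "S = (\<Sum>i=1..CARD('a) - 1. a i)"
  have S0: "0 \<le> S" unfolding S_def by (intro sum_nonneg) (simp add: a_nonneg)
  have l1: "0 < lam 1" using lam_pos[of 1] N1 by simp
  define t where "t = S / (2 * lam 1 * \<theta>\<^sup>2)"
  have t0: "0 \<le> t" unfolding t_def using S0 l1 th by simp
  have "D t \<le> (\<Sum>i=1..CARD('a) - 1. exp (- 2 * t * lam 1) * a i)"
    unfolding D_def
  proof (rule sum_mono)
    fix i assume "i \<in> {1..CARD('a) - 1}"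
    then have "lam 1 \<le> lam i" using lam_mono[of 1 i] by auto
    then have "exp (- 2 * t * lam i) \<le> exp (- 2 * t * lam 1)" using t0 by (simp add: mult_left_mono)
    then show "exp (- 2 * t * lam i) * a i \<le> exp (- 2 * t * lam 1) * a i"
      by (rule mult_right_mono) (simp add: a_nonneg)
  qed
  also have "\<dots> = S / exp (2 * t * lam 1)"
    unfolding S_def sum_distrib_left[symmetric] by (simp add: exp_minus divide_inverse mult.commute)
  also have "\<dots> \<le> S / (1 + S / \<theta>\<^sup>2)"
  proof (rule divide_left_mono[OF _ S0])
    have "1 + 2 * t * lam 1 \<le> exp (2 * t * lam 1)" by (rule exp_ge_add_one_self)
    moreover have "2 * t * lam 1 = S / \<theta>\<^sup>2" unfolding t_def using l1 by simp
    ultimately show "1 + S / \<theta>\<^sup>2 \<le> exp (2 * t * lam 1)" by simp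
    show "0 < exp (2 * t * lam 1) * (1 + S / \<theta>\<^sup>2)" using S0 th by (simp add: add_pos_nonneg)
  qed
  also have "\<dots> \<le> \<theta>\<^sup>2"
  proof -
    have "S / (1 + S / \<theta>\<^sup>2) = S * \<theta>\<^sup>2 / (\<theta>\<^sup>2 + S)" using th by (simp add: field_simps)
    also have "\<dots> \<le> \<theta>\<^sup>2" using S0 th
      by (simp add: divide_le_eq add_pos_nonneg mult.commute mult_left_mono)
    finally show ?thesis .
  qed
  finally show ?thesis using in_Tset[OF t0 _] th by (metis emptyE less_imp_le)
qed


definition "g j = ln (1 + spec_sum \<mu> \<phi> j) / (2 * lam j)"

lemma S_mono: "i \<le> j \<Longrightarrow> spec_sum \<mu> \<phi> i \<le> spec_sum \<mu> \<phi> j"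
  unfolding S_eq by (rule sum_mono2) (auto simp: a_nonneg)

lemma S_nonneg: "0 \<le> spec_sum \<mu> \<phi> j"
  unfolding S_eq by (rule sum_nonneg) (auto simp: a_nonneg)

lemma tau_props:
  assumes c: "0 < c" "c < spec_sum \<mu> \<phi> (CARD('a) - 1)"
  shows "\<And>j. jc \<mu> \<phi> c \<le> j \<Longrightarrow> j \<le> CARD('a) - 1 \<Longrightarrow> g j \<le> tau_ct \<mu> lam \<phi> c"
    and "(\<And>j. jc \<mu> \<phi> c \<le> j \<Longrightarrow> j \<le> CARD('a) - 1 \<Longrightarrow> g j \<le> x) \<Longrightarrow> tau_ct \<mu> lam \<phi> c \<le> x"
proof -
  have t: "tau_ct \<mu> lam \<phi> c = Max (g ` {jc \<mu> \<phi> c..<CARD('a)})"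
    unfolding tau_ct_def g_def ..
  have ne: "{jc \<mu> \<phi> c..<CARD('a)} \<noteq> {}" using jc_props[OF c] card_pos_univ[where 'a='a] by auto
  have iff: "j \<in> {jc \<mu> \<phi> c..<CARD('a)} \<longleftrightarrow> jc \<mu> \<phi> c \<le> j \<and> j \<le> CARD('a) - 1" for j
    using card_pos_univ[where 'a='a] by (cases "CARD('a)") auto
  show "g j \<le> tau_ct \<mu> lam \<phi> c" if "jc \<mu> \<phi> c \<le> j" "j \<le> CARD('a) - 1" for j
  proof -
    have "j < CARD('a)" using that card_pos_univ[where 'a='a] by linarith
    then show ?thesis unfolding t by (intro Max_ge) (use that in auto)
  qed
  show "tau_ct \<mu> lam \<phi> c \<le> x" if "\<And>j. jc \<mu> \<phi> c \<le> j \<Longrightarrow> j \<le> CARD('a) - 1 \<Longrightarrow> g j \<le> x"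
    unfolding t using ne that iff by (subst Max_le_iff) auto
qed

lemma ct_upper:
  assumes c: "0 < c" "c < spec_sum \<mu> \<phi> (CARD('a) - 1)"
  shows "tau_ct \<mu> lam \<phi> c \<le> T2_ct L \<pi> \<mu> (sqrt (c / (1 + c)))"
proof -
  note jp = jc_props[OF c]
  define \<theta> where "\<theta> = sqrt (c / (1 + c))"
  have th: "0 < \<theta>" unfolding \<theta>_def using c by simp
  have th2: "\<theta>\<^sup>2 = c / (1 + c)" unfolding \<theta>_def using c by simp
  have "tau_ct \<mu> lam \<phi> c \<le> T2_ct L \<pi> \<mu> \<theta>"
  proof (rule T2_ge)
    show "Tset \<theta> \<noteq> {}" by (rule Tset_nonempty[OF th]) (use jp in linarith)
    fix t assume "t \<in> Tset \<theta>"
    then have t: "0 \<le> t" "D t \<le> c / (1 + c)" using Tset_D[of t \<theta>] th2 by auto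
    show "tau_ct \<mu> lam \<phi> c \<le> t"
    proof (rule tau_props(2)[OF c])
      fix j assume j: "jc \<mu> \<phi> c \<le> j" "j \<le> CARD('a) - 1"
      have lj: "0 < lam j" using lam_pos j jp by simp
      have "exp (- 2 * t * lam j) * (1 + (\<Sum>i=1..j. a i)) < 1"
      proof (rule weight_bound[OF a_nonneg _ j(2)])
        show "1 \<le> j" using j jp by simp
        show "0 \<le> exp (- 2 * t * lam i)" for i by simp
        show "exp (- 2 * t * lam j) \<le> exp (- 2 * t * lam i)" if "1 \<le> i" "i \<le> j" for i
          using lam_mono[of i j] that j t(1) by (simp add: mult_left_mono)
        show "0 < c" by (rule c)
        show "c < (\<Sum>i=1..j. a i)" using jp(3) S_mono[of "jc \<mu> \<phi> c" j] j unfolding S_eq by simp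
        show "(\<Sum>i=1..CARD('a) - 1. exp (- 2 * t * lam i) * a i) \<le> c / (1 + c)"
          using t(2) unfolding D_def .
      qed
      then have "1 + spec_sum \<mu> \<phi> j < exp (2 * t * lam j)"
        unfolding S_eq by (simp add: exp_minus field_simps)
      then have "ln (1 + spec_sum \<mu> \<phi> j) < 2 * t * lam j"
        using S_nonneg[of j] by (metis add_pos_nonneg ln_exp ln_less_cancel_iff exp_gt_zero zero_less_one)
      then have "ln (1 + spec_sum \<mu> \<phi> j) \<le> t * (2 * lam j)" by (simp add: mult_ac)
      then show "g j \<le> t" unfolding g_def using lj by (simp add: pos_divide_le_eq)
    qed
  qed
  then show ?thesis unfolding \<theta>_def .
qed


lemma ct_lower:
  assumes c: "0 < c" "c < spec_sum \<mu> \<phi> (CARD('a) - 1)" and A: "0 < A"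
  defines "\<alpha> \<equiv> alpha_ct \<mu> lam \<phi> c"
  shows "0 < \<alpha>" "ln (1 + c) \<le> 2 * \<alpha>\<^sup>2"
    "T2_ct L \<pi> \<mu> (sqrt (c + (A + \<alpha>) / (A * exp (\<alpha> * A)))) \<le> tau_ct \<mu> lam \<phi> c * (\<alpha> + A) / \<alpha>"
proof -
  note jp = jc_props[OF c]
  define j0 where "j0 = jc \<mu> \<phi> c"
  define \<tau> where "\<tau> = tau_ct \<mu> lam \<phi> c"
  have j0: "1 \<le> j0" "j0 \<le> CARD('a) - 1" using jp unfolding j0_def by auto
  have l0: "0 < lam j0" using lam_pos j0 by simp
  have Sj0: "c < spec_sum \<mu> \<phi> j0" using jp unfolding j0_def by simp
  have gj0: "g j0 \<le> \<tau>" unfolding \<tau>_def j0_def by (rule tau_props(1)[OF c]) (use j0 j0_def in auto)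
  have lnpos: "ln (1 + c) < ln (1 + spec_sum \<mu> \<phi> j0)" using Sj0 c by simp
  have lnc: "0 < ln (1 + c)" using c by simp
  have "ln (1 + spec_sum \<mu> \<phi> j0) \<le> 2 * \<tau> * lam j0"
    using gj0 l0 unfolding g_def by (simp add: pos_divide_le_eq mult_ac)
  then have lnle: "ln (1 + c) \<le> 2 * (\<tau> * lam j0)" using lnpos by simp
  have tlpos: "0 < \<tau> * lam j0" using lnle lnc by simp
  have tpos: "0 < \<tau>" using tlpos l0 by (simp add: zero_less_mult_iff)
  have asq: "\<alpha>\<^sup>2 = \<tau> * lam j0" unfolding \<alpha>_def alpha_ct_def using tlpos
    by (simp add: \<tau>_def j0_def)
  show apos: "0 < \<alpha>" unfolding \<alpha>_def alpha_ct_def using tlpos by (simp add: \<tau>_def j0_def)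
  show "ln (1 + c) \<le> 2 * \<alpha>\<^sup>2" using lnle asq by simp
  define ts where "ts = \<tau> * (\<alpha> + A) / \<alpha>"
  define p where "p = A / (\<alpha> + A)"
  have ts0: "0 \<le> ts" unfolding ts_def using tpos apos A by simp
  have p: "0 < p" "p < 1" unfolding p_def using apos A by auto
  have tsp: "ts * (1 - p) = \<tau>"
  proof -
    have "1 - p = \<alpha> / (\<alpha> + A)" unfolding p_def using apos A by (simp add: field_simps)
    then show ?thesis unfolding ts_def using apos A by simp
  qed
  have tsp2: "ts * p * lam j0 = \<alpha> * A"
  proof -
    have nz: "\<alpha> + A \<noteq> 0" "\<alpha> \<noteq> 0" using apos A by auto
    have "ts * p = \<tau> * A / \<alpha>" unfolding ts_def p_def using nz by simp
    then have "ts * p * lam j0 = (\<tau> * lam j0) * A / \<alpha>" by simp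
    also have "\<dots> = \<alpha> * A" unfolding asq[symmetric] using apos by (simp add: power2_eq_square)
    finally show ?thesis .
  qed
  define u where "u i = exp (- 2 * ts * lam i)" for i
  have "(\<Sum>i=1..CARD('a) - 1. a i * u i) \<le> c + u j0 powr p / p"
  proof (rule split_bound[OF a_nonneg j0 _ _ _ _ p])
    show "(\<Sum>i=1..j0-1. a i) \<le> c" using jp(4) unfolding j0_def S_eq .
    show "0 \<le> u j" for j unfolding u_def by simp
    show "u i \<le> 1" if "1 \<le> i" "i < j0" for i
      using lam_nonneg[of i] that j0 ts0 unfolding u_def by (simp add: mult_nonneg_nonneg)
    show "u (Suc j) \<le> u j" if "j0 \<le> j" "j < CARD('a) - 1" for j
      using lam_mono[of j "Suc j"] that ts0 unfolding u_def by (simp add: mult_left_mono)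
    show "(1 + (\<Sum>i=1..j. a i)) * u j powr (1 - p) \<le> 1" if "j0 \<le> j" "j \<le> CARD('a) - 1" for j
    proof -
      have lj: "0 < lam j" using lam_pos that j0 by simp
      have "g j \<le> \<tau>" unfolding \<tau>_def by (rule tau_props(1)[OF c]) (use that j0_def in auto)
      then have "ln (1 + spec_sum \<mu> \<phi> j) \<le> 2 * \<tau> * lam j"
        using lj unfolding g_def by (simp add: pos_divide_le_eq mult_ac)
      then have "1 + spec_sum \<mu> \<phi> j \<le> exp (2 * \<tau> * lam j)"
        using S_nonneg[of j] by (metis add_pos_nonneg exp_le_cancel_iff exp_ln zero_less_one)
      moreover have "u j powr (1 - p) = exp (- (2 * \<tau> * lam j))"
      proof -
        have "- 2 * ts * lam j * (1 - p) = - 2 * lam j * (ts * (1 - p))" by (simp add: algebra_simps)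
        also have "\<dots> = - (2 * \<tau> * lam j)" unfolding tsp by simp
        finally show ?thesis unfolding u_def exp_powr by simp
      qed
      ultimately have "(1 + spec_sum \<mu> \<phi> j) * u j powr (1 - p) \<le> exp (2 * \<tau> * lam j) * exp (- (2 * \<tau> * lam j))"
        by (metis exp_ge_zero mult_right_mono)
      also have "\<dots> = 1" by (simp add: exp_minus)
      finally show ?thesis unfolding S_eq .
    qed
  qed
  also have "u j0 powr p / p = exp (- 2 * (\<alpha> * A)) * ((A + \<alpha>) / A)"
    unfolding u_def exp_powr p_def[symmetric]
  proof -
    have "- 2 * ts * lam j0 * p = - 2 * (\<alpha> * A)" using tsp2 by (simp add: algebra_simps)
    then show "exp (- 2 * ts * lam j0 * p) / p = exp (- 2 * (\<alpha> * A)) * ((A + \<alpha>) / A)"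
      unfolding p_def using A apos by simp
  qed
  also have "\<dots> \<le> exp (- (\<alpha> * A)) * ((A + \<alpha>) / A)"
    using A apos by (intro mult_right_mono) auto
  also have "\<dots> = (A + \<alpha>) / (A * exp (\<alpha> * A))" by (simp add: exp_minus field_simps)
  finally have Dts: "D ts \<le> c + (A + \<alpha>) / (A * exp (\<alpha> * A))"
    unfolding D_def u_def by (simp add: mult.commute)
  have pos2: "0 \<le> c + (A + \<alpha>) / (A * exp (\<alpha> * A))" using c A apos by simp
  have "ts \<in> Tset (sqrt (c + (A + \<alpha>) / (A * exp (\<alpha> * A))))"
    by (rule in_Tset[OF ts0]) (use pos2 Dts in auto)
  then show "T2_ct L \<pi> \<mu> (sqrt (c + (A + \<alpha>) / (A * exp (\<alpha> * A)))) \<le> tau_ct \<mu> lam \<phi> c * (\<alpha> + A) / \<alpha>"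
    using T2_le unfolding ts_def \<tau>_def by blast
qed


lemma ct_main:
  "(\<forall>c A. 0 < c \<and> c < pi_sq \<pi> (\<lambda>y. \<mu> y / \<pi> y) - 1 \<and> 0 < A \<longrightarrow>
         (let \<alpha> = alpha_ct \<mu> lam \<phi> c in
           \<alpha> / (\<alpha> + A) * T2_ct L \<pi> \<mu> (sqrt (c + (A + \<alpha>) / (A * exp (\<alpha> * A))))
             \<le> tau_ct \<mu> lam \<phi> c
           \<and> tau_ct \<mu> lam \<phi> c \<le> T2_ct L \<pi> \<mu> (sqrt (c / (1 + c))))) \<and>
      (\<forall>\<epsilon>. 0 < \<epsilon> \<and> \<epsilon> < sqrt (min (pi_sq \<pi> (\<lambda>y. \<mu> y / \<pi> y - 1)) 1 / 2) \<longrightarrow>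
         tau_ct \<mu> lam \<phi> (2 * \<epsilon>\<^sup>2) \<le> T2_ct L \<pi> \<mu> \<epsilon>
         \<and> T2_ct L \<pi> \<mu> \<epsilon> \<le> 6 / \<epsilon> ^ 4 * tau_ct \<mu> lam \<phi> (\<epsilon>\<^sup>2 / 2))"
proof (intro conjI allI impI)
  fix c A :: real
  assume h: "0 < c \<and> c < pi_sq \<pi> (\<lambda>y. \<mu> y / \<pi> y) - 1 \<and> 0 < A"
  then have c: "0 < c" "c < spec_sum \<mu> \<phi> (CARD('a) - 1)" and A: "0 < A" using P_eq by auto
  define \<alpha> where "\<alpha> = alpha_ct \<mu> lam \<phi> c"
  note lw = ct_lower[OF c A, folded \<alpha>_def]
  have "\<alpha> / (\<alpha> + A) * T2_ct L \<pi> \<mu> (sqrt (c + (A + \<alpha>) / (A * exp (\<alpha> * A))))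
      \<le> \<alpha> / (\<alpha> + A) * (tau_ct \<mu> lam \<phi> c * (\<alpha> + A) / \<alpha>)"
    by (rule mult_left_mono[OF lw(3)]) (use lw(1) A in simp)
  also have "\<dots> = tau_ct \<mu> lam \<phi> c" using lw(1) A by simp
  finally show "let \<alpha> = alpha_ct \<mu> lam \<phi> c in
           \<alpha> / (\<alpha> + A) * T2_ct L \<pi> \<mu> (sqrt (c + (A + \<alpha>) / (A * exp (\<alpha> * A))))
             \<le> tau_ct \<mu> lam \<phi> c
           \<and> tau_ct \<mu> lam \<phi> c \<le> T2_ct L \<pi> \<mu> (sqrt (c / (1 + c)))"
    using ct_upper[OF c] unfolding \<alpha>_def Let_def by simp
next
  fix \<epsilon> :: real
  assume h: "0 < \<epsilon> \<and> \<epsilon> < sqrt (min (pi_sq \<pi> (\<lambda>y. \<mu> y / \<pi> y - 1)) 1 / 2)"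
  then have e: "0 < \<epsilon>" and "\<epsilon>\<^sup>2 < (sqrt (min (spec_sum \<mu> \<phi> (CARD('a) - 1)) 1 / 2))\<^sup>2"
    unfolding P_eq2 by (auto intro: power_strict_mono)
  moreover have "0 \<le> min (spec_sum \<mu> \<phi> (CARD('a) - 1)) 1 / 2" using S_nonneg by simp
  ultimately have e2: "\<epsilon>\<^sup>2 < min (spec_sum \<mu> \<phi> (CARD('a) - 1)) 1 / 2" by simp
  then have e3: "\<epsilon>\<^sup>2 < 1/2" "2 * \<epsilon>\<^sup>2 < spec_sum \<mu> \<phi> (CARD('a) - 1)" by auto
  have ep2: "0 < \<epsilon>\<^sup>2" using e by simp
  have N1: "1 \<le> CARD('a) - 1" using jc_props[of "2 * \<epsilon>\<^sup>2"] e3 ep2 by fastforce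
  have nonemp: "Tset \<epsilon> \<noteq> {}" by (rule Tset_nonempty[OF e N1])
  have c1: "0 < 2 * \<epsilon>\<^sup>2" using ep2 by simp
  have le1: "\<epsilon> \<le> sqrt (2 * \<epsilon>\<^sup>2 / (1 + 2 * \<epsilon>\<^sup>2))"
  proof -
    have "\<epsilon>\<^sup>2 * (1 + 2 * \<epsilon>\<^sup>2) \<le> \<epsilon>\<^sup>2 * 2"
      by (rule mult_left_mono) (use e3 ep2 in auto)
    then have "\<epsilon>\<^sup>2 \<le> 2 * \<epsilon>\<^sup>2 / (1 + 2 * \<epsilon>\<^sup>2)" using ep2
      by (subst pos_le_divide_eq) (auto simp: add_pos_pos mult.commute)
    then have "sqrt (\<epsilon>\<^sup>2) \<le> sqrt (2 * \<epsilon>\<^sup>2 / (1 + 2 * \<epsilon>\<^sup>2))" by (rule real_sqrt_le_mono)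
    then show ?thesis using e by simp
  qed
  show "tau_ct \<mu> lam \<phi> (2 * \<epsilon>\<^sup>2) \<le> T2_ct L \<pi> \<mu> \<epsilon>"
    using ct_upper[OF c1 e3(2)] T2_mono[OF nonemp le1] by linarith
  define c where "c = \<epsilon>\<^sup>2 / 2"
  have c: "0 < c" "c < spec_sum \<mu> \<phi> (CARD('a) - 1)" unfolding c_def using ep2 e3 by linarith+
  define \<alpha> where "\<alpha> = alpha_ct \<mu> lam \<phi> c"
  define A where "A = (6 / \<epsilon> ^ 4 - 1) * \<alpha>"
  have lw0: "0 < \<alpha>" "ln (1 + c) \<le> 2 * \<alpha>\<^sup>2" using ct_lower(1,2)[OF c, of 1] unfolding \<alpha>_def by auto
  note ec = eps_choice[OF e e3(1) lw0(1) lw0(2)[unfolded c_def], folded A_def]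
  note lw = ct_lower[OF c ec(1), folded \<alpha>_def]
  define \<theta> where "\<theta> = sqrt (c + (A + \<alpha>) / (A * exp (\<alpha> * A)))"
  have "0 < (A + \<alpha>) / (A * exp (\<alpha> * A))" using ec(1) lw0(1) by simp
  then have th: "0 < \<theta>" unfolding \<theta>_def using c by simp
  have le2: "\<theta> \<le> \<epsilon>"
  proof -
    have "c + (A + \<alpha>) / (A * exp (\<alpha> * A)) \<le> \<epsilon>\<^sup>2" using ec(3) unfolding c_def by linarith
    then have "\<theta> \<le> sqrt (\<epsilon>\<^sup>2)" unfolding \<theta>_def by (rule real_sqrt_le_mono)
    then show ?thesis using e by simp
  qed
  have "T2_ct L \<pi> \<mu> \<epsilon> \<le> T2_ct L \<pi> \<mu> \<theta>" by (rule T2_mono[OF Tset_nonempty[OF th N1] le2])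
  also have "\<dots> \<le> tau_ct \<mu> lam \<phi> c * (\<alpha> + A) / \<alpha>" using lw(3) unfolding \<theta>_def .
  also have "\<dots> = 6 / \<epsilon> ^ 4 * tau_ct \<mu> lam \<phi> (\<epsilon>\<^sup>2 / 2)"
  proof -
    have "tau_ct \<mu> lam \<phi> c * (\<alpha> + A) / \<alpha> = tau_ct \<mu> lam \<phi> c * ((\<alpha> + A) / \<alpha>)"
      by (rule times_divide_eq_right[symmetric])
    also have "\<dots> = tau_ct \<mu> lam \<phi> c * (6 / \<epsilon> ^ 4)" unfolding ec(2) ..
    finally show ?thesis unfolding c_def by (simp only: mult.commute)
  qed
  finally show "T2_ct L \<pi> \<mu> \<epsilon> \<le> 6 / \<epsilon> ^ 4 * tau_ct \<mu> lam \<phi> (\<epsilon>\<^sup>2 / 2)" .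
qed

end



lemma pow_sq_exp: "(\<beta>::real) \<noteq> 0 \<Longrightarrow> (\<beta>\<^sup>2) ^ m = exp (- 2 * real m * (- ln \<bar>\<beta>\<bar>))"
proof -
  assume b: "\<beta> \<noteq> 0"
  have "(\<beta>\<^sup>2) ^ m = \<bar>\<beta>\<bar> ^ (2 * m)" by (simp add: power_mult power2_abs)
  also have "\<dots> = exp (ln \<bar>\<beta>\<bar>) ^ (2 * m)" using b by simp
  also have "\<dots> = exp (real (2 * m) * ln \<bar>\<beta>\<bar>)" by (rule exp_of_nat_mult[symmetric])
  finally show ?thesis by simp
qed

locale dt_setting =
  fixes K :: "'a::finite \<Rightarrow> 'a \<Rightarrow> real" and \<pi> \<mu> :: "'a \<Rightarrow> real"
    and \<beta> :: "nat \<Rightarrow> real" and \<phi> :: "nat \<Rightarrow> 'a \<Rightarrow> real"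
  assumes st: "stochastic K" and irr: "irreducible_kernel K" and pp: "pos_prob_vec \<pi>"
    and rev: "reversible K \<pi>" and pm: "prob_vec \<mu>" and sp: "dt_spectral K \<pi> \<beta> \<phi>"
begin

definition "a i = (mu_of \<mu> (\<phi> i))\<^sup>2"
definition "D m = (\<Sum>i=1..CARD('a) - 1. (\<beta> i)\<^sup>2 ^ m * a i)"
definition "lr i = - ln \<bar>\<beta> i\<bar>"
definition "tm j = ereal (ln (1 + spec_sum \<mu> \<phi> j)) / (2 * lam_dt \<beta> j)"

lemma onb: "onb \<pi> \<phi>"
  using pp sp unfolding onb_def pos_prob_vec_def dt_spectral_def by auto

lemma phi0: "\<phi> 0 = (\<lambda>x. 1)" using sp unfolding dt_spectral_def by auto
lemma beta0: "\<beta> 0 = 1" using sp unfolding dt_spectral_def by auto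

lemma a_nonneg: "0 \<le> a i" unfolding a_def by simp
lemma S_eq: "spec_sum \<mu> \<phi> j = (\<Sum>i=1..j. a i)" unfolding spec_sum_def a_def ..
lemma S_mono: "i \<le> j \<Longrightarrow> spec_sum \<mu> \<phi> i \<le> spec_sum \<mu> \<phi> j"
  unfolding S_eq by (rule sum_mono2) (auto simp: a_nonneg)
lemma S_nonneg: "0 \<le> spec_sum \<mu> \<phi> j"
  unfolding S_eq by (rule sum_nonneg) (auto simp: a_nonneg)

lemma beta_le1: "i \<le> CARD('a) - 1 \<Longrightarrow> \<bar>\<beta> i\<bar> \<le> 1"
  by (rule dt_beta_le1[OF st sp]) (use card_pos_univ[where 'a='a] in linarith)

lemma beta_mono: "1 \<le> i \<Longrightarrow> i \<le> j \<Longrightarrow> j \<le> CARD('a) - 1 \<Longrightarrow> \<bar>\<beta> j\<bar> \<le> \<bar>\<beta> i\<bar>"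
proof -
  assume h: "1 \<le> i" "i \<le> j" "j \<le> CARD('a) - 1"
  have o: "\<forall>i j. 1 \<le> i \<and> i \<le> j \<and> j < CARD('a) \<longrightarrow> \<bar>\<beta> j\<bar> \<le> \<bar>\<beta> i\<bar>" using sp unfolding dt_spectral_def by blast
  have "j < CARD('a)" using h(3) card_pos_univ[where 'a='a] by linarith
  then show ?thesis using o h by blast
qed

lemma sq_mono: "1 \<le> i \<Longrightarrow> i \<le> j \<Longrightarrow> j \<le> CARD('a) - 1 \<Longrightarrow> (\<beta> j)\<^sup>2 ^ m \<le> (\<beta> i)\<^sup>2 ^ m"
proof -
  assume h: "1 \<le> i" "i \<le> j" "j \<le> CARD('a) - 1"
  have "(\<beta> j)\<^sup>2 \<le> (\<beta> i)\<^sup>2" using beta_mono[OF h] by (simp add: abs_le_square_iff)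
  then show ?thesis by (rule power_mono) simp
qed

lemma sq_le1: "i \<le> CARD('a) - 1 \<Longrightarrow> (\<beta> i)\<^sup>2 ^ m \<le> 1"
proof -
  assume h: "i \<le> CARD('a) - 1"
  have "(\<beta> i)\<^sup>2 \<le> 1" using beta_le1[OF h] by (simp add: abs_square_le_1)
  then show ?thesis by (rule power_le_one[rotated]) simp
qed

lemma P_eq: "pi_sq \<pi> (\<lambda>y. \<mu> y / \<pi> y) - 1 = spec_sum \<mu> \<phi> (CARD('a) - 1)"
  by (rule spec_sum_total[OF onb pm phi0])

lemma P_eq2: "pi_sq \<pi> (\<lambda>y. \<mu> y / \<pi> y - 1) = spec_sum \<mu> \<phi> (CARD('a) - 1)"
  using pi_sq_minus1[OF pp pm] P_eq by simp

lemma d2_eq: "d2_dt K \<pi> \<mu> m = sqrt (D m)"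
proof -
  have eig: "\<And>i x. i < CARD('a) \<Longrightarrow> (\<Sum>y\<in>UNIV. K x y * \<phi> i y) = \<beta> i * \<phi> i x"
    using sp unfolding dt_spectral_def by auto
  have "d2_dt K \<pi> \<mu> m = sqrt (\<Sum>i\<in>{1..<CARD('a)}. (\<beta> i ^ m * mu_of \<mu> (\<phi> i))\<^sup>2)"
    unfolding d2_dt_def
  proof (rule d2_generic[OF onb phi0])
    show "\<beta> 0 ^ m * mu_of \<mu> (\<phi> 0) = 1" using beta0 pm phi0 by (simp add: mu_of_1)
    show "mpow K m x y = (\<Sum>i<CARD('a). \<beta> i ^ m * \<phi> i x * \<phi> i y * \<pi> y)" for x y
      by (rule onb_mpow[OF onb rev eig])
  qed
  also have "{1..<CARD('a)} = {1..CARD('a) - 1}" using card_pos_univ[where 'a='a] by auto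
  also have "(\<Sum>i\<in>{1..CARD('a) - 1}. (\<beta> i ^ m * mu_of \<mu> (\<phi> i))\<^sup>2) = D m"
    unfolding D_def a_def
    by (intro sum.cong refl) (simp add: power_mult_distrib power_mult[symmetric] mult.commute)
  finally show ?thesis .
qed

lemma D_nonneg: "0 \<le> D m"
  unfolding D_def by (intro sum_nonneg) (simp add: a_nonneg)

lemma T2_le: "0 \<le> \<theta> \<Longrightarrow> D m \<le> \<theta>\<^sup>2 \<Longrightarrow> T2_dt K \<pi> \<mu> \<theta> \<le> enat m"
proof -
  assume h: "0 \<le> \<theta>" "D m \<le> \<theta>\<^sup>2"
  then have d: "d2_dt K \<pi> \<mu> m \<le> \<theta>" unfolding d2_eq using real_sqrt_le_mono[of "D m" "\<theta>\<^sup>2"] D_nonneg[of m] by simp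
  then have "T2_dt K \<pi> \<mu> \<theta> = enat (LEAST m. d2_dt K \<pi> \<mu> m \<le> \<theta>)" unfolding T2_dt_def by auto
  also have "\<dots> \<le> enat m" using Least_le[of "\<lambda>m. d2_dt K \<pi> \<mu> m \<le> \<theta>", OF d] by simp
  finally show ?thesis .
qed

lemma T2_cases: "T2_dt K \<pi> \<mu> \<theta> = \<infinity> \<or> (\<exists>m. T2_dt K \<pi> \<mu> \<theta> = enat m \<and> D m \<le> \<theta>\<^sup>2 \<and> 0 \<le> \<theta>)"
proof (cases "\<exists>m. d2_dt K \<pi> \<mu> m \<le> \<theta>")
  case True
  define m where "m = (LEAST m. d2_dt K \<pi> \<mu> m \<le> \<theta>)"
  have d: "sqrt (D m) \<le> \<theta>" using LeastI_ex[OF True] unfolding m_def d2_eq .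
  then have t0: "0 \<le> \<theta>" using real_sqrt_ge_zero[OF D_nonneg[of m]] by linarith
  have "(sqrt (D m))\<^sup>2 \<le> \<theta>\<^sup>2" using d by (intro power_mono) (auto simp: D_nonneg)
  then have "D m \<le> \<theta>\<^sup>2" using D_nonneg[of m] by simp
  then show ?thesis using True t0 unfolding T2_dt_def m_def by auto
next
  case False then show ?thesis unfolding T2_dt_def by auto
qed

lemma T2_mono: "\<theta>1 \<le> \<theta>2 \<Longrightarrow> T2_dt K \<pi> \<mu> \<theta>2 \<le> T2_dt K \<pi> \<mu> \<theta>1"
proof -
  assume th: "\<theta>1 \<le> \<theta>2"
  show ?thesis
  proof (cases "\<exists>m. d2_dt K \<pi> \<mu> m \<le> \<theta>1")
    case True
    then obtain m where m: "d2_dt K \<pi> \<mu> m \<le> \<theta>1" by blast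
    then have m2: "d2_dt K \<pi> \<mu> m \<le> \<theta>2" using th by simp
    have "(LEAST m. d2_dt K \<pi> \<mu> m \<le> \<theta>2) \<le> (LEAST m. d2_dt K \<pi> \<mu> m \<le> \<theta>1)"
      by (rule Least_le) (use LeastI_ex[OF True] th in simp)
    then show ?thesis using True m2 unfolding T2_dt_def by auto
  next
    case False then show ?thesis unfolding T2_dt_def by simp
  qed
qed

lemma tm_zero: "\<beta> j = 0 \<Longrightarrow> tm j = 0"
  unfolding tm_def lam_dt_def by simp

lemma tm_pos: "\<beta> j \<noteq> 0 \<Longrightarrow> \<bar>\<beta> j\<bar> < 1 \<Longrightarrow> 0 < lr j \<and> tm j = ereal (ln (1 + spec_sum \<mu> \<phi> j) / (2 * lr j))"
proof -
  assume b: "\<beta> j \<noteq> 0" "\<bar>\<beta> j\<bar> < 1"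
  then have "ln \<bar>\<beta> j\<bar> < 0" by simp
  then have l: "0 < lr j" unfolding lr_def by simp
  then show ?thesis unfolding tm_def lam_dt_def lr_def[symmetric] using b by simp
qed

lemma tm_inf: "\<bar>\<beta> j\<bar> = 1 \<Longrightarrow> 0 < spec_sum \<mu> \<phi> j \<Longrightarrow> tm j = \<infinity>"
proof -
  assume b: "\<bar>\<beta> j\<bar> = 1" "0 < spec_sum \<mu> \<phi> j"
  then have "0 < ln (1 + spec_sum \<mu> \<phi> j)" by simp
  then show ?thesis unfolding tm_def lam_dt_def using b by simp
qed

lemma tm_nonneg: "j \<le> CARD('a) - 1 \<Longrightarrow> 0 \<le> tm j"
proof -
  assume j: "j \<le> CARD('a) - 1"
  have "0 \<le> ln (1 + spec_sum \<mu> \<phi> j)" using S_nonneg[of j] by simp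
  moreover have "\<bar>\<beta> j\<bar> \<le> 1" using beta_le1 j .
  ultimately show ?thesis unfolding tm_def lam_dt_def
    by (auto simp: ereal_divide divide_nonneg_nonneg)
qed


lemma tau_props:
  assumes c: "0 < c" "c < spec_sum \<mu> \<phi> (CARD('a) - 1)"
  shows "\<And>j. jc \<mu> \<phi> c \<le> j \<Longrightarrow> j \<le> CARD('a) - 1 \<Longrightarrow> tm j \<le> tau_dt \<mu> \<beta> \<phi> c"
    and "(\<And>j. jc \<mu> \<phi> c \<le> j \<Longrightarrow> j \<le> CARD('a) - 1 \<Longrightarrow> tm j \<le> x) \<Longrightarrow> tau_dt \<mu> \<beta> \<phi> c \<le> x"
proof -
  have t: "tau_dt \<mu> \<beta> \<phi> c = Max (tm ` {jc \<mu> \<phi> c..<CARD('a)})"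
    unfolding tau_dt_def tm_def ..
  have ne: "{jc \<mu> \<phi> c..<CARD('a)} \<noteq> {}" using jc_props[OF c] card_pos_univ[where 'a='a] by auto
  have iff: "j \<in> {jc \<mu> \<phi> c..<CARD('a)} \<longleftrightarrow> jc \<mu> \<phi> c \<le> j \<and> j \<le> CARD('a) - 1" for j
    using card_pos_univ[where 'a='a] by (cases "CARD('a)") auto
  show "tm j \<le> tau_dt \<mu> \<beta> \<phi> c" if "jc \<mu> \<phi> c \<le> j" "j \<le> CARD('a) - 1" for j
  proof -
    have "j < CARD('a)" using that card_pos_univ[where 'a='a] by linarith
    then show ?thesis unfolding t by (intro Max_ge) (use that in auto)
  qed
  show "tau_dt \<mu> \<beta> \<phi> c \<le> x" if "\<And>j. jc \<mu> \<phi> c \<le> j \<Longrightarrow> j \<le> CARD('a) - 1 \<Longrightarrow> tm j \<le> x"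
    unfolding t using ne that iff by (subst Max_le_iff) auto
qed

lemma dt_upper:
  assumes c: "0 < c" "c < spec_sum \<mu> \<phi> (CARD('a) - 1)"
  shows "tau_dt \<mu> \<beta> \<phi> c \<le> ereal_of_enat (T2_dt K \<pi> \<mu> (sqrt (c / (1 + c))))"
proof -
  note jp = jc_props[OF c]
  define \<theta> where "\<theta> = sqrt (c / (1 + c))"
  have th2: "\<theta>\<^sup>2 = c / (1 + c)" unfolding \<theta>_def using c by simp
  consider "T2_dt K \<pi> \<mu> \<theta> = \<infinity>" | m where "T2_dt K \<pi> \<mu> \<theta> = enat m" "D m \<le> \<theta>\<^sup>2"
    using T2_cases[of \<theta>] by (elim disjE exE conjE) auto
  then have "tau_dt \<mu> \<beta> \<phi> c \<le> ereal_of_enat (T2_dt K \<pi> \<mu> \<theta>)"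
  proof cases
    case 1 then show ?thesis by simp
  next
    case 2
    show ?thesis unfolding 2(1) ereal_of_enat_simps
    proof (rule tau_props(2)[OF c])
      fix j assume j: "jc \<mu> \<phi> c \<le> j" "j \<le> CARD('a) - 1"
      have "(\<beta> j)\<^sup>2 ^ m * (1 + (\<Sum>i=1..j. a i)) < 1"
      proof (rule weight_bound[OF a_nonneg _ j(2)])
        show "1 \<le> j" using j jp by simp
        show "0 \<le> (\<beta> i)\<^sup>2 ^ m" for i by simp
        show "(\<beta> j)\<^sup>2 ^ m \<le> (\<beta> i)\<^sup>2 ^ m" if "1 \<le> i" "i \<le> j" for i
          using sq_mono that j by simp
        show "0 < c" by (rule c)
        show "c < (\<Sum>i=1..j. a i)" using jp(3) S_mono[of "jc \<mu> \<phi> c" j] j unfolding S_eq by simp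
        show "(\<Sum>i=1..CARD('a) - 1. (\<beta> i)\<^sup>2 ^ m * a i) \<le> c / (1 + c)"
          using 2(2) th2 unfolding D_def by simp
      qed
      then have lt: "(\<beta> j)\<^sup>2 ^ m * (1 + spec_sum \<mu> \<phi> j) < 1" unfolding S_eq .
      show "tm j \<le> ereal (real m)"
      proof (cases "\<beta> j = 0")
        case True then show ?thesis by (simp add: tm_zero)
      next
        case False
        have "exp (- (2 * real m * lr j)) * (1 + spec_sum \<mu> \<phi> j) < 1"
          using lt unfolding pow_sq_exp[OF False] lr_def by simp
        then have "1 + spec_sum \<mu> \<phi> j < exp (2 * real m * lr j)"
          by (simp add: exp_minus field_simps)
        then have lnl: "ln (1 + spec_sum \<mu> \<phi> j) < 2 * real m * lr j"
          using S_nonneg[of j] by (metis add_pos_nonneg ln_exp ln_less_cancel_iff exp_gt_zero zero_less_one)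
        have "0 \<le> ln (1 + spec_sum \<mu> \<phi> j)" using S_nonneg[of j] by simp
        then have "0 < real m * lr j" using lnl by simp
        then have lrp: "0 < lr j" by (simp add: zero_less_mult_iff)
        then have "\<bar>\<beta> j\<bar> < 1" unfolding lr_def using False by simp
        then have "tm j = ereal (ln (1 + spec_sum \<mu> \<phi> j) / (2 * lr j))" using tm_pos False by blast
        also have "\<dots> \<le> ereal (real m)"
          using lnl lrp by (simp add: pos_divide_le_eq mult_ac)
        finally show ?thesis .
      qed
    qed
  qed
  then show ?thesis unfolding \<theta>_def .
qed


lemma fin_lt1:
  assumes c: "0 < c" "c < spec_sum \<mu> \<phi> (CARD('a) - 1)" and tf: "tau_dt \<mu> \<beta> \<phi> c = ereal \<tau>r"
    and j: "jc \<mu> \<phi> c \<le> j" "j \<le> CARD('a) - 1" and b: "\<beta> j \<noteq> 0"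
  shows "0 < lr j" "ln (1 + spec_sum \<mu> \<phi> j) / (2 * lr j) \<le> \<tau>r" "0 < spec_sum \<mu> \<phi> j"
proof -
  note jp = jc_props[OF c]
  show Sp: "0 < spec_sum \<mu> \<phi> j" using jp(3) S_mono[OF j(1)] c by simp
  have tle: "tm j \<le> ereal \<tau>r" using tau_props(1)[OF c j] tf by simp
  have "\<bar>\<beta> j\<bar> \<noteq> 1"
  proof
    assume "\<bar>\<beta> j\<bar> = 1"
    then have "tm j = \<infinity>" using tm_inf Sp by blast
    then show False using tle by simp
  qed
  then have lt: "\<bar>\<beta> j\<bar> < 1" using beta_le1[OF j(2)] by simp
  show "0 < lr j" using tm_pos[OF b lt] by blast
  show "ln (1 + spec_sum \<mu> \<phi> j) / (2 * lr j) \<le> \<tau>r" using tm_pos[OF b lt] tle by simp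
qed

lemma dt_B:
  assumes c: "0 < c" "c < spec_sum \<mu> \<phi> (CARD('a) - 1)" and tf: "tau_dt \<mu> \<beta> \<phi> c = ereal \<tau>r"
    and b0: "\<beta> (jc \<mu> \<phi> c) \<noteq> 0" and A: "0 < A"
  defines "\<alpha> \<equiv> alpha_dt \<mu> \<beta> \<phi> c"
  shows "0 < \<alpha>" "ln (1 + c) \<le> 2 * \<alpha>\<^sup>2"
    "\<exists>m. real m < \<tau>r * (\<alpha> + A) / \<alpha> + 1 \<and>
        T2_dt K \<pi> \<mu> (sqrt (c + (A + \<alpha>) / (A * exp (\<alpha> * A)))) \<le> enat m"
proof -
  note jp = jc_props[OF c]
  define j0 where "j0 = jc \<mu> \<phi> c"
  have j0: "1 \<le> j0" "j0 \<le> CARD('a) - 1" using jp unfolding j0_def by auto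
  note f0 = fin_lt1[OF c tf _ j0(2) b0[folded j0_def], unfolded j0_def, OF order_refl, folded j0_def]
  have Sj0: "c < spec_sum \<mu> \<phi> j0" using jp unfolding j0_def by simp
  have "ln (1 + spec_sum \<mu> \<phi> j0) \<le> 2 * \<tau>r * lr j0"
    using f0(1,2) by (simp add: pos_divide_le_eq mult_ac)
  moreover have "ln (1 + c) < ln (1 + spec_sum \<mu> \<phi> j0)" using Sj0 c by simp
  ultimately have lnle: "ln (1 + c) \<le> 2 * (\<tau>r * lr j0)" by simp
  have lnc: "0 < ln (1 + c)" using c by simp
  have tlpos: "0 < \<tau>r * lr j0" using lnle lnc by simp
  have tpos: "0 < \<tau>r" using tlpos f0(1) by (simp add: zero_less_mult_iff)
  have adef: "\<alpha> = sqrt (\<tau>r * lr j0)"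
    unfolding \<alpha>_def alpha_dt_def tf j0_def[symmetric] lam_dt_def using b0 by (simp add: j0_def lr_def)
  have asq: "\<alpha>\<^sup>2 = \<tau>r * lr j0" unfolding adef using tlpos by simp
  show apos: "0 < \<alpha>" unfolding adef using tlpos by simp
  show "ln (1 + c) \<le> 2 * \<alpha>\<^sup>2" using lnle asq by simp
  define ts where "ts = \<tau>r * (\<alpha> + A) / \<alpha>"
  define p where "p = A / (\<alpha> + A)"
  define m where "m = nat \<lceil>ts\<rceil>"
  have ts0: "0 < ts" unfolding ts_def using tpos apos A by simp
  have mts: "ts \<le> real m" "real m < ts + 1" unfolding m_def using ts0 by linarith+
  have m1: "0 < m" using mts ts0 by simp
  have p: "0 < p" "p < 1" unfolding p_def using apos A by auto
  have nz: "\<alpha> + A \<noteq> 0" "\<alpha> \<noteq> 0" using apos A by auto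
  have tsp: "ts * (1 - p) = \<tau>r"
  proof -
    have "1 - p = \<alpha> / (\<alpha> + A)" unfolding p_def using apos A by (simp add: field_simps)
    then show ?thesis unfolding ts_def using apos A by simp
  qed
  have tsp2: "ts * p * lr j0 = \<alpha> * A"
  proof -
    have "ts * p = \<tau>r * A / \<alpha>" unfolding ts_def p_def using nz by simp
    then have "ts * p * lr j0 = (\<tau>r * lr j0) * A / \<alpha>" by simp
    also have "\<dots> = \<alpha> * A" unfolding asq[symmetric] using apos by (simp add: power2_eq_square)
    finally show ?thesis .
  qed
  define u where "u i = (\<beta> i)\<^sup>2 ^ m" for i
  have "(\<Sum>i=1..CARD('a) - 1. a i * u i) \<le> c + u j0 powr p / p"
  proof (rule split_bound[OF a_nonneg j0 _ _ _ _ p])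
    show "(\<Sum>i=1..j0-1. a i) \<le> c" using jp(4) unfolding j0_def S_eq .
    show "0 \<le> u j" for j unfolding u_def by simp
    show "u i \<le> 1" if "1 \<le> i" "i < j0" for i
      unfolding u_def by (rule sq_le1) (use that j0 in linarith)
    show "u (Suc j) \<le> u j" if "j0 \<le> j" "j < CARD('a) - 1" for j
      unfolding u_def by (rule sq_mono) (use that j0 in linarith)+
    show "(1 + (\<Sum>i=1..j. a i)) * u j powr (1 - p) \<le> 1" if "j0 \<le> j" "j \<le> CARD('a) - 1" for j
    proof (cases "\<beta> j = 0")
      case True then show ?thesis unfolding u_def using m1 by (simp add: zero_power)
    next
      case False
      note fj = fin_lt1[OF c tf _ that(2) False, folded j0_def, OF that(1)]
      have "ln (1 + spec_sum \<mu> \<phi> j) \<le> 2 * \<tau>r * lr j"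
        using fj(1,2) by (simp add: pos_divide_le_eq mult_ac)
      then have e1: "1 + spec_sum \<mu> \<phi> j \<le> exp (2 * \<tau>r * lr j)"
        using S_nonneg[of j] by (metis add_pos_nonneg exp_le_cancel_iff exp_ln zero_less_one)
      have "u j powr (1 - p) = exp (- 2 * real m * lr j * (1 - p))"
        unfolding u_def pow_sq_exp[OF False] exp_powr lr_def ..
      also have "\<dots> \<le> exp (- 2 * ts * lr j * (1 - p))"
        using mts(1) fj(1) p by (simp add: mult_left_mono mult_right_mono)
      also have "- 2 * ts * lr j * (1 - p) = - (2 * \<tau>r * lr j)"
      proof -
        have "- 2 * ts * lr j * (1 - p) = - 2 * lr j * (ts * (1 - p))" by (simp add: algebra_simps)
        also have "\<dots> = - (2 * \<tau>r * lr j)" unfolding tsp by simp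
        finally show ?thesis .
      qed
      finally have e2: "u j powr (1 - p) \<le> exp (- (2 * \<tau>r * lr j))" .
      have "(1 + spec_sum \<mu> \<phi> j) * u j powr (1 - p) \<le> exp (2 * \<tau>r * lr j) * exp (- (2 * \<tau>r * lr j))"
        using e1 e2 S_nonneg[of j] by (intro mult_mono) auto
      also have "\<dots> = 1" by (simp add: exp_minus)
      finally show ?thesis unfolding S_eq .
    qed
  qed
  also have "u j0 powr p / p \<le> exp (- 2 * (\<alpha> * A)) * ((A + \<alpha>) / A)"
  proof -
    have "u j0 powr p = exp (- 2 * real m * lr j0 * p)"
      unfolding u_def pow_sq_exp[OF b0[folded j0_def]] exp_powr lr_def ..
    also have "\<dots> \<le> exp (- 2 * ts * lr j0 * p)"
      using mts(1) f0(1) p by (simp add: mult_left_mono mult_right_mono)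
    also have "- 2 * ts * lr j0 * p = - 2 * (\<alpha> * A)" using tsp2 by (simp add: algebra_simps)
    finally have "u j0 powr p / p \<le> exp (- 2 * (\<alpha> * A)) / p" using p by (simp add: divide_right_mono)
    also have "\<dots> = exp (- 2 * (\<alpha> * A)) * ((A + \<alpha>) / A)" unfolding p_def using A apos by simp
    finally show ?thesis .
  qed
  also have "\<dots> \<le> exp (- (\<alpha> * A)) * ((A + \<alpha>) / A)"
    using A apos by (intro mult_right_mono) auto
  also have "\<dots> = (A + \<alpha>) / (A * exp (\<alpha> * A))" by (simp add: exp_minus field_simps)
  finally have Dm: "D m \<le> c + (A + \<alpha>) / (A * exp (\<alpha> * A))"
    unfolding D_def u_def by (simp add: mult.commute)
  have pos2: "0 \<le> c + (A + \<alpha>) / (A * exp (\<alpha> * A))" using c A apos by simp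
  have "T2_dt K \<pi> \<mu> (sqrt (c + (A + \<alpha>) / (A * exp (\<alpha> * A)))) \<le> enat m"
    by (rule T2_le) (use pos2 Dm in auto)
  then show "\<exists>m. real m < \<tau>r * (\<alpha> + A) / \<alpha> + 1 \<and>
        T2_dt K \<pi> \<mu> (sqrt (c + (A + \<alpha>) / (A * exp (\<alpha> * A)))) \<le> enat m"
    using mts(2) unfolding ts_def by blast
qed


lemma dt_A:
  assumes c: "0 < c" "c < spec_sum \<mu> \<phi> (CARD('a) - 1)" and b0: "\<beta> (jc \<mu> \<phi> c) = 0"
  shows "tau_dt \<mu> \<beta> \<phi> c = 0" "alpha_dt \<mu> \<beta> \<phi> c = 0"
    "0 \<le> \<theta> \<Longrightarrow> c \<le> \<theta>\<^sup>2 \<Longrightarrow> T2_dt K \<pi> \<mu> \<theta> \<le> enat 1"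
proof -
  note jp = jc_props[OF c]
  define j0 where "j0 = jc \<mu> \<phi> c"
  have j0: "1 \<le> j0" "j0 \<le> CARD('a) - 1" using jp unfolding j0_def by auto
  have bz: "\<beta> j = 0" if "j0 \<le> j" "j \<le> CARD('a) - 1" for j
    using beta_mono[OF j0(1) that] b0 unfolding j0_def by simp
  have "tau_dt \<mu> \<beta> \<phi> c \<le> 0"
    by (rule tau_props(2)[OF c]) (use bz tm_zero j0_def in auto)
  moreover have "tm j0 \<le> tau_dt \<mu> \<beta> \<phi> c" by (rule tau_props(1)[OF c]) (use j0 j0_def in auto)
  ultimately show t0: "tau_dt \<mu> \<beta> \<phi> c = 0" using tm_zero[OF b0] unfolding j0_def by simp
  show "alpha_dt \<mu> \<beta> \<phi> c = 0" unfolding alpha_dt_def t0 by simp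
  assume th: "0 \<le> \<theta>" "c \<le> \<theta>\<^sup>2"
  have "(\<Sum>i=1..CARD('a) - 1. a i * (\<beta> i)\<^sup>2) \<le> c + ((\<beta> j0)\<^sup>2) powr (1/2) / (1/2)"
  proof (rule split_bound[OF a_nonneg j0, where u = "\<lambda>i. (\<beta> i)\<^sup>2"])
    show "(\<Sum>i=1..j0-1. a i) \<le> c" using jp(4) unfolding j0_def S_eq .
    show "(\<beta> i)\<^sup>2 \<le> 1" if "1 \<le> i" "i < j0" for i
      using sq_le1[of i 1] that j0 by simp
    show "(\<beta> (Suc j))\<^sup>2 \<le> (\<beta> j)\<^sup>2" if "j0 \<le> j" "j < CARD('a) - 1" for j
      using sq_mono[of j "Suc j" 1] that j0 by simp
    show "(1 + (\<Sum>i=1..j. a i)) * ((\<beta> j)\<^sup>2) powr (1 - 1/2) \<le> 1" if "j0 \<le> j" "j \<le> CARD('a) - 1" for j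
      using bz[OF that] by simp
  qed auto
  then have "D 1 \<le> \<theta>\<^sup>2" using b0 th unfolding D_def j0_def by (simp add: mult.commute)
  then show "T2_dt K \<pi> \<mu> \<theta> \<le> enat 1" using T2_le th(1) by blast
qed

lemma tau_nonneg:
  assumes c: "0 < c" "c < spec_sum \<mu> \<phi> (CARD('a) - 1)"
  shows "0 \<le> tau_dt \<mu> \<beta> \<phi> c"
proof -
  note jp = jc_props[OF c]
  have "tm (jc \<mu> \<phi> c) \<le> tau_dt \<mu> \<beta> \<phi> c" by (rule tau_props(1)[OF c]) (use jp in auto)
  moreover have "0 \<le> tm (jc \<mu> \<phi> c)" using tm_nonneg jp by simp
  ultimately show ?thesis by simp
qed


lemma tau_cases:
  assumes c: "0 < c" "c < spec_sum \<mu> \<phi> (CARD('a) - 1)"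
  obtains "tau_dt \<mu> \<beta> \<phi> c = \<infinity>" | \<tau>r where "tau_dt \<mu> \<beta> \<phi> c = ereal \<tau>r" "0 \<le> \<tau>r"
proof -
  have "0 \<le> tau_dt \<mu> \<beta> \<phi> c" by (rule tau_nonneg[OF c])
  then show ?thesis using that by (cases "tau_dt \<mu> \<beta> \<phi> c") auto
qed

lemma dt_main:
  "(\<forall>c A. 0 < c \<and> c < pi_sq \<pi> (\<lambda>y. \<mu> y / \<pi> y) - 1 \<and> 0 < A \<longrightarrow>
         (let \<alpha> = alpha_dt \<mu> \<beta> \<phi> c in
           ereal (\<alpha> / (\<alpha> + A)) *
             (ereal_of_enat (T2_dt K \<pi> \<mu> (sqrt (c + (A + \<alpha>) / (A * exp (\<alpha> * A))))) - 1)
             \<le> tau_dt \<mu> \<beta> \<phi> c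
           \<and> tau_dt \<mu> \<beta> \<phi> c \<le> ereal_of_enat (T2_dt K \<pi> \<mu> (sqrt (c / (1 + c)))))) \<and>
      (\<forall>\<epsilon>. 0 < \<epsilon> \<and> \<epsilon> < sqrt (min (pi_sq \<pi> (\<lambda>y. \<mu> y / \<pi> y - 1)) 1 / 2) \<longrightarrow>
         tau_dt \<mu> \<beta> \<phi> (2 * \<epsilon>\<^sup>2) \<le> ereal_of_enat (T2_dt K \<pi> \<mu> \<epsilon>)
         \<and> ereal_of_enat (T2_dt K \<pi> \<mu> \<epsilon>) \<le> ereal (6 / \<epsilon> ^ 4) * tau_dt \<mu> \<beta> \<phi> (\<epsilon>\<^sup>2 / 2) + 1)"
proof (intro conjI allI impI)
  fix c A :: real
  assume h: "0 < c \<and> c < pi_sq \<pi> (\<lambda>y. \<mu> y / \<pi> y) - 1 \<and> 0 < A"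
  then have c: "0 < c" "c < spec_sum \<mu> \<phi> (CARD('a) - 1)" and A: "0 < A" using P_eq by auto
  define \<alpha> where "\<alpha> = alpha_dt \<mu> \<beta> \<phi> c"
  define \<theta> where "\<theta> = sqrt (c + (A + \<alpha>) / (A * exp (\<alpha> * A)))"
  have "ereal (\<alpha> / (\<alpha> + A)) * (ereal_of_enat (T2_dt K \<pi> \<mu> \<theta>) - 1) \<le> tau_dt \<mu> \<beta> \<phi> c"
  proof (cases rule: tau_cases[OF c])
    case 1 then show ?thesis by simp
  next
    case (2 \<tau>r)
    show ?thesis
    proof (cases "\<beta> (jc \<mu> \<phi> c) = 0")
      case True
      then have "\<alpha> = 0" unfolding \<alpha>_def using dt_A[OF c] by blast
      then show ?thesis using 2 by (simp add: zero_ereal_def[symmetric])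
    next
      case False
      note B = dt_B[OF c 2(1) False A, folded \<alpha>_def, folded \<theta>_def]
      obtain m where m: "real m < \<tau>r * (\<alpha> + A) / \<alpha> + 1" "T2_dt K \<pi> \<mu> \<theta> \<le> enat m"
        using B(3) by blast
      then obtain k where k: "T2_dt K \<pi> \<mu> \<theta> = enat k" "k \<le> m"
        by (cases "T2_dt K \<pi> \<mu> \<theta>") auto
      define q where "q = \<alpha> / (\<alpha> + A)"
      have q: "0 < q" unfolding q_def using B(1) A by simp
      have "q * (real k - 1) \<le> q * (real m - 1)" using k(2) q by (simp add: mult_left_mono)
      also have "\<dots> \<le> q * (\<tau>r * (\<alpha> + A) / \<alpha>)" using m(1) q by (intro mult_left_mono) auto
      also have "\<dots> = \<tau>r" unfolding q_def using B(1) A by simp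
      finally have "q * (real k - 1) \<le> \<tau>r" .
      then show ?thesis unfolding k(1) 2(1) q_def[symmetric] by (simp add: one_ereal_def)
    qed
  qed
  then show "let \<alpha> = alpha_dt \<mu> \<beta> \<phi> c in
           ereal (\<alpha> / (\<alpha> + A)) *
             (ereal_of_enat (T2_dt K \<pi> \<mu> (sqrt (c + (A + \<alpha>) / (A * exp (\<alpha> * A))))) - 1)
             \<le> tau_dt \<mu> \<beta> \<phi> c
           \<and> tau_dt \<mu> \<beta> \<phi> c \<le> ereal_of_enat (T2_dt K \<pi> \<mu> (sqrt (c / (1 + c))))"
    using dt_upper[OF c] unfolding \<alpha>_def \<theta>_def Let_def by simp
next
  fix \<epsilon> :: real
  assume h: "0 < \<epsilon> \<and> \<epsilon> < sqrt (min (pi_sq \<pi> (\<lambda>y. \<mu> y / \<pi> y - 1)) 1 / 2)"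
  then have e: "0 < \<epsilon>" and "\<epsilon>\<^sup>2 < (sqrt (min (spec_sum \<mu> \<phi> (CARD('a) - 1)) 1 / 2))\<^sup>2"
    unfolding P_eq2 by (auto intro: power_strict_mono)
  moreover have "0 \<le> min (spec_sum \<mu> \<phi> (CARD('a) - 1)) 1 / 2" using S_nonneg by simp
  ultimately have e2: "\<epsilon>\<^sup>2 < min (spec_sum \<mu> \<phi> (CARD('a) - 1)) 1 / 2" by simp
  then have e3: "\<epsilon>\<^sup>2 < 1/2" "2 * \<epsilon>\<^sup>2 < spec_sum \<mu> \<phi> (CARD('a) - 1)" by auto
  have ep2: "0 < \<epsilon>\<^sup>2" using e by simp
  have c1: "0 < 2 * \<epsilon>\<^sup>2" using ep2 by simp
  have le1: "\<epsilon> \<le> sqrt (2 * \<epsilon>\<^sup>2 / (1 + 2 * \<epsilon>\<^sup>2))"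
  proof -
    have "\<epsilon>\<^sup>2 * (1 + 2 * \<epsilon>\<^sup>2) \<le> \<epsilon>\<^sup>2 * 2"
      by (rule mult_left_mono) (use e3 ep2 in auto)
    then have "\<epsilon>\<^sup>2 \<le> 2 * \<epsilon>\<^sup>2 / (1 + 2 * \<epsilon>\<^sup>2)" using ep2
      by (subst pos_le_divide_eq) (auto simp: add_pos_pos mult.commute)
    then have "sqrt (\<epsilon>\<^sup>2) \<le> sqrt (2 * \<epsilon>\<^sup>2 / (1 + 2 * \<epsilon>\<^sup>2))" by (rule real_sqrt_le_mono)
    then show ?thesis using e by simp
  qed
  have "ereal_of_enat (T2_dt K \<pi> \<mu> (sqrt (2 * \<epsilon>\<^sup>2 / (1 + 2 * \<epsilon>\<^sup>2)))) \<le> ereal_of_enat (T2_dt K \<pi> \<mu> \<epsilon>)"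
    using T2_mono[OF le1] by simp
  then show "tau_dt \<mu> \<beta> \<phi> (2 * \<epsilon>\<^sup>2) \<le> ereal_of_enat (T2_dt K \<pi> \<mu> \<epsilon>)"
    using dt_upper[OF c1 e3(2)] by (rule order_trans[rotated])
  define c where "c = \<epsilon>\<^sup>2 / 2"
  have c: "0 < c" "c < spec_sum \<mu> \<phi> (CARD('a) - 1)" unfolding c_def using ep2 e3 by linarith+
  have e6: "0 < 6 / \<epsilon> ^ 4" using e by simp
  show "ereal_of_enat (T2_dt K \<pi> \<mu> \<epsilon>) \<le> ereal (6 / \<epsilon> ^ 4) * tau_dt \<mu> \<beta> \<phi> (\<epsilon>\<^sup>2 / 2) + 1"
  proof (cases rule: tau_cases[OF c])
    case 1 then show ?thesis using e6 unfolding c_def by simp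
  next
    case (2 \<tau>r)
    show ?thesis
    proof (cases "\<beta> (jc \<mu> \<phi> c) = 0")
      case True
      have "T2_dt K \<pi> \<mu> \<epsilon> \<le> enat 1" by (rule dt_A(3)[OF c True]) (use e ep2 in \<open>auto simp: c_def\<close>)
      then have "ereal_of_enat (T2_dt K \<pi> \<mu> \<epsilon>) \<le> 1"
        by (metis ereal_of_enat_le_iff ereal_of_enat_simps(1) of_nat_1 one_ereal_def)
      then show ?thesis using dt_A(1)[OF c True] unfolding c_def by simp
    next
      case False
      define \<alpha> where "\<alpha> = alpha_dt \<mu> \<beta> \<phi> c"
      define A where "A = (6 / \<epsilon> ^ 4 - 1) * \<alpha>"
      have lw0: "0 < \<alpha>" "ln (1 + c) \<le> 2 * \<alpha>\<^sup>2" using dt_B(1,2)[OF c 2(1) False, of 1] unfolding \<alpha>_def by auto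
      note ec = eps_choice[OF e e3(1) lw0(1) lw0(2)[unfolded c_def], folded A_def]
      note B = dt_B[OF c 2(1) False ec(1), folded \<alpha>_def]
      define \<theta> where "\<theta> = sqrt (c + (A + \<alpha>) / (A * exp (\<alpha> * A)))"
      obtain m where m: "real m < \<tau>r * (\<alpha> + A) / \<alpha> + 1" "T2_dt K \<pi> \<mu> \<theta> \<le> enat m"
        using B(3) unfolding \<theta>_def by blast
      have le2: "\<theta> \<le> \<epsilon>"
      proof -
        have "c + (A + \<alpha>) / (A * exp (\<alpha> * A)) \<le> \<epsilon>\<^sup>2" using ec(3) unfolding c_def by linarith
        then have "\<theta> \<le> sqrt (\<epsilon>\<^sup>2)" unfolding \<theta>_def by (rule real_sqrt_le_mono)
        then show ?thesis using e by simp
      qed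
      have "T2_dt K \<pi> \<mu> \<epsilon> \<le> enat m" using T2_mono[OF le2] m(2) by (rule order_trans)
      then have "ereal_of_enat (T2_dt K \<pi> \<mu> \<epsilon>) \<le> ereal (real m)"
        by (metis ereal_of_enat_le_iff ereal_of_enat_simps(1))
      also have "\<dots> \<le> ereal (6 / \<epsilon> ^ 4 * \<tau>r + 1)"
      proof -
        have "\<tau>r * (\<alpha> + A) / \<alpha> = \<tau>r * ((\<alpha> + A) / \<alpha>)" by (rule times_divide_eq_right[symmetric])
        also have "\<dots> = 6 / \<epsilon> ^ 4 * \<tau>r" unfolding ec(2) by (simp only: mult.commute)
        finally show ?thesis using m(1) by simp
      qed
      also have "\<dots> = ereal (6 / \<epsilon> ^ 4) * tau_dt \<mu> \<beta> \<phi> (\<epsilon>\<^sup>2 / 2) + 1"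
        using 2(1) unfolding c_def by (simp add: one_ereal_def)
      finally show ?thesis .
    qed
  qed
qed

end


theorem proposition3p4:
  fixes \<mu> \<pi> :: "'a::finite \<Rightarrow> real"
    and L K :: "'a \<Rightarrow> 'a \<Rightarrow> real"
    and lam \<beta> :: "nat \<Rightarrow> real"
    and \<phi> \<psi> :: "nat \<Rightarrow> 'a \<Rightarrow> real"
  shows
   "(generator L \<and> irreducible_kernel L \<and> pos_prob_vec \<pi> \<and> reversible L \<pi> \<and> prob_vec \<mu>
       \<and> ct_spectral L \<pi> lam \<phi> \<longrightarrow>
      (\<forall>c A. 0 < c \<and> c < pi_sq \<pi> (\<lambda>y. \<mu> y / \<pi> y) - 1 \<and> 0 < A \<longrightarrow>
         (let \<alpha> = alpha_ct \<mu> lam \<phi> c in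
           \<alpha> / (\<alpha> + A) * T2_ct L \<pi> \<mu> (sqrt (c + (A + \<alpha>) / (A * exp (\<alpha> * A))))
             \<le> tau_ct \<mu> lam \<phi> c
           \<and> tau_ct \<mu> lam \<phi> c \<le> T2_ct L \<pi> \<mu> (sqrt (c / (1 + c))))) \<and>
      (\<forall>\<epsilon>. 0 < \<epsilon> \<and> \<epsilon> < sqrt (min (pi_sq \<pi> (\<lambda>y. \<mu> y / \<pi> y - 1)) 1 / 2) \<longrightarrow>
         tau_ct \<mu> lam \<phi> (2 * \<epsilon>\<^sup>2) \<le> T2_ct L \<pi> \<mu> \<epsilon>
         \<and> T2_ct L \<pi> \<mu> \<epsilon> \<le> 6 / \<epsilon> ^ 4 * tau_ct \<mu> lam \<phi> (\<epsilon>\<^sup>2 / 2)))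
    \<and>
    (stochastic K \<and> irreducible_kernel K \<and> pos_prob_vec \<pi> \<and> reversible K \<pi> \<and> prob_vec \<mu>
       \<and> dt_spectral K \<pi> \<beta> \<psi> \<longrightarrow>
      (\<forall>c A. 0 < c \<and> c < pi_sq \<pi> (\<lambda>y. \<mu> y / \<pi> y) - 1 \<and> 0 < A \<longrightarrow>
         (let \<alpha> = alpha_dt \<mu> \<beta> \<psi> c in
           ereal (\<alpha> / (\<alpha> + A)) *
             (ereal_of_enat (T2_dt K \<pi> \<mu> (sqrt (c + (A + \<alpha>) / (A * exp (\<alpha> * A))))) - 1)
             \<le> tau_dt \<mu> \<beta> \<psi> c
           \<and> tau_dt \<mu> \<beta> \<psi> c \<le> ereal_of_enat (T2_dt K \<pi> \<mu> (sqrt (c / (1 + c)))))) \<and>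
      (\<forall>\<epsilon>. 0 < \<epsilon> \<and> \<epsilon> < sqrt (min (pi_sq \<pi> (\<lambda>y. \<mu> y / \<pi> y - 1)) 1 / 2) \<longrightarrow>
         tau_dt \<mu> \<beta> \<psi> (2 * \<epsilon>\<^sup>2) \<le> ereal_of_enat (T2_dt K \<pi> \<mu> \<epsilon>)
         \<and> ereal_of_enat (T2_dt K \<pi> \<mu> \<epsilon>) \<le> ereal (6 / \<epsilon> ^ 4) * tau_dt \<mu> \<beta> \<psi> (\<epsilon>\<^sup>2 / 2) + 1))"
  proof (rule conjI; rule impI)
  assume H: "generator L \<and> irreducible_kernel L \<and> pos_prob_vec \<pi> \<and> reversible L \<pi> \<and> prob_vec \<mu>
       \<and> ct_spectral L \<pi> lam \<phi>"
  interpret ct_setting L \<pi> \<mu> lam \<phi> using H by unfold_locales auto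
  show "(\<forall>c A. 0 < c \<and> c < pi_sq \<pi> (\<lambda>y. \<mu> y / \<pi> y) - 1 \<and> 0 < A \<longrightarrow>
         (let \<alpha> = alpha_ct \<mu> lam \<phi> c in
           \<alpha> / (\<alpha> + A) * T2_ct L \<pi> \<mu> (sqrt (c + (A + \<alpha>) / (A * exp (\<alpha> * A))))
             \<le> tau_ct \<mu> lam \<phi> c
           \<and> tau_ct \<mu> lam \<phi> c \<le> T2_ct L \<pi> \<mu> (sqrt (c / (1 + c))))) \<and>
      (\<forall>\<epsilon>. 0 < \<epsilon> \<and> \<epsilon> < sqrt (min (pi_sq \<pi> (\<lambda>y. \<mu> y / \<pi> y - 1)) 1 / 2) \<longrightarrow>
         tau_ct \<mu> lam \<phi> (2 * \<epsilon>\<^sup>2) \<le> T2_ct L \<pi> \<mu> \<epsilon>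
         \<and> T2_ct L \<pi> \<mu> \<epsilon> \<le> 6 / \<epsilon> ^ 4 * tau_ct \<mu> lam \<phi> (\<epsilon>\<^sup>2 / 2))"
    by (rule ct_main)
next
  assume H: "stochastic K \<and> irreducible_kernel K \<and> pos_prob_vec \<pi> \<and> reversible K \<pi> \<and> prob_vec \<mu>
       \<and> dt_spectral K \<pi> \<beta> \<psi>"
  interpret dt_setting K \<pi> \<mu> \<beta> \<psi> using H by unfold_locales auto
  show "(\<forall>c A. 0 < c \<and> c < pi_sq \<pi> (\<lambda>y. \<mu> y / \<pi> y) - 1 \<and> 0 < A \<longrightarrow>
         (let \<alpha> = alpha_dt \<mu> \<beta> \<psi> c in
           ereal (\<alpha> / (\<alpha> + A)) *
             (ereal_of_enat (T2_dt K \<pi> \<mu> (sqrt (c + (A + \<alpha>) / (A * exp (\<alpha> * A))))) - 1)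
             \<le> tau_dt \<mu> \<beta> \<psi> c
           \<and> tau_dt \<mu> \<beta> \<psi> c \<le> ereal_of_enat (T2_dt K \<pi> \<mu> (sqrt (c / (1 + c)))))) \<and>
      (\<forall>\<epsilon>. 0 < \<epsilon> \<and> \<epsilon> < sqrt (min (pi_sq \<pi> (\<lambda>y. \<mu> y / \<pi> y - 1)) 1 / 2) \<longrightarrow>
         tau_dt \<mu> \<beta> \<psi> (2 * \<epsilon>\<^sup>2) \<le> ereal_of_enat (T2_dt K \<pi> \<mu> \<epsilon>)
         \<and> ereal_of_enat (T2_dt K \<pi> \<mu> \<epsilon>) \<le> ereal (6 / \<epsilon> ^ 4) * tau_dt \<mu> \<beta> \<psi> (\<epsilon>\<^sup>2 / 2) + 1)"
    by (rule dt_main)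
qed

end
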